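(* Let $I$ be a finite set. The space $\mathcal{P}(\mathbf{k}\mathbf{HG})[I]$ of primitive elements of $\mathbf{k}\mathbf{HG}[I]$ has a basis consisting of the elements \[\omega_{\mathcal{G}}=\sum_{\mathcal{G}\le\mathcal{H}}\mu(\mathcal{G},\mathcal{H})\,\mathcal{H}\] for hypergraphs $\mathcal{G}$ on $I$ whose complement is connected. Further, the subspace of primitives of the Hopf algebra of hypergraphs $\mathcal{F}(\mathbf{k}\mathbf{HG})$ has a basis given by the elements $[\omega_{\mathcal{G}}]=\sum_{\mathcal{G}\le\mathcal{H}}\mu(\mathcal{G},\mathcal{H})[\mathcal{H}]$ for hypergraphs $\mathcal{G}$ whose complement is connected.
   Context: $\mathbf{k}$ is a field of characteristic $0$. A hypergraph on a finite vertex set $I$ is $\mathcal{G}=(I,E)$ with $E$ a set of subsets of $I$ of size at least $2$. $\mathbf{HG}[I]$ is the set of hypergraphs on $I$, ordered by inclusion of hyperedge sets; $\mu$ is its Möbius function; $\mathbf{k}\mathbf{HG}[I]$ is the vector space with basis $\mathbf{HG}[I]$. Multiplication: for $\mathcal{G}_1$ on $S$, $\mathcal{G}_2$ on $T$ disjoint, $m_{S,T}(\mathcal{G}_1,\mathcal{G}_2)=(S\sqcup T,E(\mathcal{G}_1)\cup E(\mathcal{G}_2))$ (disjoint union). Comultiplication: $\Delta_{S,T}(\mathcal{G})=\mathcal{G}|S\otimes\mathcal{G}|T$ where $\mathcal{G}|S=(S,\{U\in E(\mathcal{G}):U\subseteq S\})$. An element $p\in\mathbf{k}\mathbf{HG}[I]$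 is primitive if $\Delta_{S,T}(p)=0$ for all $I=S\sqcup T$ with $S,T$ nonempty. The complement of $\mathcal{G}=(I,E)$ is $\mathcal{G}^c=(I,\{U\subseteq I:|U|\ge2,\ U\notin E\})$. A hypergraph is connected if it is not the disjoint union $m_{S,T}(\mathcal{G}_1,\mathcal{G}_2)$ of hypergraphs on nonempty vertex sets $S,T$. The Fock functor gives the Hopf algebra $\mathcal{F}(\mathbf{k}\mathbf{HG})=\bigoplus_n\mathbf{k}\mathbf{HG}[\{1,\dots,n\}]_{S_n}$ (coinvariants under relabelling), $[\mathcal{H}]$ denoting the class of $\mathcal{H}$, with product $[\mathcal{G}_1][\mathcal{G}_2]=[m(\mathcal{G}_1,\mathcal{G}_2)]$ and coproduct $\Delta([\mathcal{G}])=\sum_{S\sqcup T=\{1,\dots,n\}}[\mathcal{G}|S]\otimes[\mathcal{G}|T]$; $h$ is primitive there if $\Delta(h)=h\otimes1+1\otimes h$. In $[\omega_{\mathcal{G}}]$ the sum runs over $\mathcal{H}\in\mathbf{HG}[\{1,\dots,n\}]$, not over classes. *)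

theory Defs
  imports Complex_Main "HOL-Library.Function_Algebras"
begin

text \<open>A hypergraph on the vertex set I is identified with its set of hyperedges E,
  a set of subsets of I of size at least 2.\<close>

definition hyperedges :: "'v set \<Rightarrow> 'v set set" where
  "hyperedges I = {U. U \<subseteq> I \<and> 2 \<le> card U}"

definition HG :: "'v set \<Rightarrow> 'v set set set" where
  "HG I = Pow (hyperedges I)"

definition hg_restrict :: "'v set set \<Rightarrow> 'v set \<Rightarrow> 'v set set" where
  "hg_restrict E S = {U \<in> E. U \<subseteq> S}"

definition hg_compl :: "'v set \<Rightarrow> 'v set set \<Rightarrow> 'v set set" where
  "hg_compl I E = hyperedges I - E"

definition hg_connected :: "'v set \<Rightarrow> 'v set set \<Rightarrow> bool" where
  "hg_connected I E \<longleftrightarrow> \<not> (\<exists>S T E1 E2. S \<noteq> {} \<and> T \<noteq> {} \<and> S \<inter> T = {} \<and> S \<union> T = I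
       \<and> E1 \<in> HG S \<and> E2 \<in> HG T \<and> E = E1 \<union> E2)"

definition is_mobius :: "'a set set \<Rightarrow> ('a set \<Rightarrow> 'a set \<Rightarrow> 'k::comm_ring_1) \<Rightarrow> bool" where
  "is_mobius P m \<longleftrightarrow>
     (\<forall>x\<in>P. m x x = 1) \<and>
     (\<forall>x\<in>P. \<forall>y\<in>P. x \<subset> y \<longrightarrow> m x y = - (\<Sum>z\<in>{z\<in>P. x \<subseteq> z \<and> z \<subset> y}. m x z)) \<and>
     (\<forall>x y. \<not> (x \<in> P \<and> y \<in> P \<and> x \<subseteq> y) \<longrightarrow> m x y = 0)"

definition mobius :: "'a set set \<Rightarrow> 'a set \<Rightarrow> 'a set \<Rightarrow> 'k::comm_ring_1" where
  "mobius P = (THE m. is_mobius P m)"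

text \<open>Vectors are coefficient functions on hypergraphs; kHG[I] consists of those
  supported on HG[I] (a finite set, since I is finite).\<close>

abbreviation fscale :: "'k::field \<Rightarrow> ('x \<Rightarrow> 'k) \<Rightarrow> ('x \<Rightarrow> 'k)" where
  "fscale c f \<equiv> (\<lambda>x. c * f x)"

definition kHG :: "'v set \<Rightarrow> ('v set set \<Rightarrow> 'k::field) set" where
  "kHG I = {v. \<forall>H. v H \<noteq> 0 \<longrightarrow> H \<in> HG I}"

text \<open>The component Delta_{S,T}(v) in kHG[S] (x) kHG[T], written in the basis
  HG[S] x HG[T] of the tensor product: coefficient of G1 (x) G2.\<close>
definition coprod_ST :: "'v set \<Rightarrow> 'v set \<Rightarrow> 'v set \<Rightarrow> ('v set set \<Rightarrow> 'k::field)
     \<Rightarrow> ('v set set \<times> 'v set set \<Rightarrow> 'k)" where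
  "coprod_ST I S T v = (\<lambda>(G1, G2).
      \<Sum>H\<in>{H \<in> HG I. hg_restrict H S = G1 \<and> hg_restrict H T = G2}. v H)"

definition hg_primitive :: "'v set \<Rightarrow> ('v set set \<Rightarrow> 'k::field) \<Rightarrow> bool" where
  "hg_primitive I p \<longleftrightarrow> p \<in> kHG I \<and>
     (\<forall>S T. S \<union> T = I \<and> S \<inter> T = {} \<and> S \<noteq> {} \<and> T \<noteq> {} \<longrightarrow> coprod_ST I S T p = (\<lambda>_. 0))"

definition omega :: "'v set \<Rightarrow> 'v set set \<Rightarrow> ('v set set \<Rightarrow> 'k::field)" where
  "omega I G = (\<lambda>H. if H \<in> HG I \<and> G \<subseteq> H then mobius (HG I) G H else 0)"

text \<open>Basis of kHG[{1..n}]_{S_n}: isomorphism classes.\<close>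

type_synonym hgclass = "nat \<times> nat set set set"

definition cl_of :: "nat set \<Rightarrow> nat set set \<Rightarrow> hgclass" where
  "cl_of S E = (card S, {E'. \<exists>f. bij_betw f S {1..card S} \<and> E' = (image f) ` E})"

definition fock_classes :: "hgclass set" where
  "fock_classes = {cl_of {1..n} E | n E. E \<in> HG {1..n}}"

text \<open>F(kHG): finitely supported coefficient functions on classes (direct sum over n).\<close>
definition fock_space :: "(hgclass \<Rightarrow> 'k::field) set" where
  "fock_space = {h. finite {c. h c \<noteq> 0} \<and> (\<forall>c. h c \<noteq> 0 \<longrightarrow> c \<in> fock_classes)}"

text \<open>The canonical projection kHG[{1..n}] -> kHG[{1..n}]_{S_n}, v |-> [v].\<close>
definition cls :: "nat \<Rightarrow> (nat set set \<Rightarrow> 'k::field) \<Rightarrow> (hgclass \<Rightarrow> 'k)" where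
  "cls n v = (\<lambda>c. if c \<in> fock_classes \<and> fst c = n then (\<Sum>H\<in>snd c. v H) else 0)"

definition fock_rep :: "hgclass \<Rightarrow> nat set set" where
  "fock_rep c = (SOME G. G \<in> HG {1..fst c} \<and> cl_of {1..fst c} G = c)"

text \<open>Coproduct Delta([G]) = sum over S disjoint-union T = {1..n} of [G|S] (x) [G|T],
  extended linearly; elements of F (x) F are written in the basis of pairs of classes.\<close>
definition fock_delta :: "(hgclass \<Rightarrow> 'k::field) \<Rightarrow> (hgclass \<times> hgclass \<Rightarrow> 'k)" where
  "fock_delta h = (\<lambda>(c1, c2). \<Sum>c\<in>{c \<in> fock_classes. h c \<noteq> 0}.
      h c * of_nat (card {S. S \<subseteq> {1..fst c}
          \<and> cl_of S (hg_restrict (fock_rep c) S) = c1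
          \<and> cl_of ({1..fst c} - S) (hg_restrict (fock_rep c) ({1..fst c} - S)) = c2}))"

definition fock_one :: "hgclass \<Rightarrow> 'k::field" where
  "fock_one = (\<lambda>c. if c = cl_of {} {} then 1 else 0)"

definition fock_primitive :: "(hgclass \<Rightarrow> 'k::field) \<Rightarrow> bool" where
  "fock_primitive h \<longleftrightarrow> h \<in> fock_space \<and>
     fock_delta h = (\<lambda>(c1, c2). h c1 * fock_one c2 + fock_one c1 * h c2)"

end

theory Submission
  imports Defs
begin


lemma alt_sum_Pow:
  assumes "finite D"
  shows "(\<Sum>Z\<in>Pow D. (-1::'k::comm_ring_1)^card Z) = (if D = {} then 1 else 0)"
  using assms
proof (induction rule: finite_induct)
  case empty
  then show ?case by simp
next
  case (insert x F)
  have inj: "inj_on (insert x) (Pow F)" using insert(2)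
    unfolding inj_on_def by (metis PowD insert_ident subset_iff)
  have disj: "Pow F \<inter> insert x ` Pow F = {}" using insert(2) by auto
  have fin: "finite (Pow F)" using insert(1) by simp
  have "(\<Sum>Z\<in>Pow (insert x F). (-1::'k)^card Z)
      = (\<Sum>Z\<in>Pow F. (-1::'k)^card Z) + (\<Sum>Z\<in>insert x ` Pow F. (-1::'k)^card Z)"
    unfolding Pow_insert by (rule sum.union_disjoint) (use fin disj in auto)
  also have "(\<Sum>Z\<in>insert x ` Pow F. (-1::'k)^card Z) = (\<Sum>Z\<in>Pow F. (-1::'k)^card (insert x Z))"
    by (rule sum.reindex[OF inj, unfolded comp_def])
  also have "\<dots> = (\<Sum>Z\<in>Pow F. - ((-1::'k)^card Z))"
  proof (rule sum.cong)
    fix Z assume "Z \<in> Pow F"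
    then have "finite Z" "x \<notin> Z" using insert(1,2) finite_subset by auto
    then show "(-1::'k)^card (insert x Z) = - ((-1::'k)^card Z)" by simp
  qed simp
  finally show ?case by (simp add: sum_negf)
qed

lemma interval_sum:
  assumes "finite K" "G \<subseteq> K"
  shows "(\<Sum>H\<in>{H. G \<subseteq> H \<and> H \<subseteq> K}. (-1::'k::comm_ring_1)^card (H - G)) = (if G = K then 1 else 0)"
proof -
  have eq: "{H. G \<subseteq> H \<and> H \<subseteq> K} = (\<lambda>Z. G \<union> Z) ` Pow (K - G)"
  proof (intro equalityI subsetI)
    fix H assume "H \<in> {H. G \<subseteq> H \<and> H \<subseteq> K}"
    then have "H = G \<union> (H - G)" "H - G \<in> Pow (K - G)" by auto
    then show "H \<in> (\<lambda>Z. G \<union> Z) ` Pow (K - G)" by (rule image_eqI)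
  next
    fix H assume "H \<in> (\<lambda>Z. G \<union> Z) ` Pow (K - G)"
    then show "H \<in> {H. G \<subseteq> H \<and> H \<subseteq> K}" using assms(2) by blast
  qed
  have inj: "inj_on (\<lambda>Z. G \<union> Z) (Pow (K - G))"
  proof (rule inj_onI)
    fix Z Z' assume "Z \<in> Pow (K - G)" "Z' \<in> Pow (K - G)" "G \<union> Z = G \<union> Z'"
    then show "Z = Z'" by blast
  qed
  have "(\<Sum>H\<in>{H. G \<subseteq> H \<and> H \<subseteq> K}. (-1::'k)^card (H - G)) = (\<Sum>Z\<in>Pow (K - G). (-1::'k)^card (G \<union> Z - G))"
    unfolding eq by (rule sum.reindex[OF inj, unfolded comp_def])
  also have "\<dots> = (\<Sum>Z\<in>Pow (K - G). (-1::'k)^card Z)"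
  proof (rule sum.cong)
    fix Z assume "Z \<in> Pow (K - G)"
    then have "G \<union> Z - G = Z" by blast
    then show "(-1::'k)^card (G \<union> Z - G) = (-1)^card Z" by simp
  qed simp
  also have "K - G = {} \<longleftrightarrow> G = K" using assms by blast
  then have "(\<Sum>Z\<in>Pow (K - G). (-1::'k)^card Z) = (if G = K then 1 else 0)"
    using alt_sum_Pow[of "K - G"] assms by simp
  finally show ?thesis .
qed

lemma interval_sum2:
  assumes "finite K" "H \<subseteq> K"
  shows "(\<Sum>G\<in>{G. H \<subseteq> G \<and> G \<subseteq> K}. (-1::'k::comm_ring_1)^card (K - G)) = (if H = K then 1 else 0)"
proof -
  have eq: "{G. H \<subseteq> G \<and> G \<subseteq> K} = (\<lambda>Z. K - Z) ` Pow (K - H)"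
  proof (intro equalityI subsetI)
    fix G assume "G \<in> {G. H \<subseteq> G \<and> G \<subseteq> K}"
    then have "G = K - (K - G)" "K - G \<in> Pow (K - H)" by auto
    then show "G \<in> (\<lambda>Z. K - Z) ` Pow (K - H)" by (rule image_eqI)
  next
    fix G assume "G \<in> (\<lambda>Z. K - Z) ` Pow (K - H)"
    then show "G \<in> {G. H \<subseteq> G \<and> G \<subseteq> K}" using assms(2) by blast
  qed
  have inj: "inj_on (\<lambda>Z. K - Z) (Pow (K - H))"
  proof (rule inj_onI)
    fix Z Z' assume "Z \<in> Pow (K - H)" "Z' \<in> Pow (K - H)" "K - Z = K - Z'"
    then show "Z = Z'" by blast
  qed
  have "(\<Sum>G\<in>{G. H \<subseteq> G \<and> G \<subseteq> K}. (-1::'k)^card (K - G)) = (\<Sum>Z\<in>Pow (K - H). (-1::'k)^card (K - (K - Z)))"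
    unfolding eq by (rule sum.reindex[OF inj, unfolded comp_def])
  also have "\<dots> = (\<Sum>Z\<in>Pow (K - H). (-1::'k)^card Z)"
  proof (rule sum.cong)
    fix Z assume "Z \<in> Pow (K - H)"
    then have "K - (K - Z) = Z" by blast
    then show "(-1::'k)^card (K - (K - Z)) = (-1)^card Z" by simp
  qed simp
  also have "K - H = {} \<longleftrightarrow> H = K" using assms by blast
  then have "(\<Sum>Z\<in>Pow (K - H). (-1::'k)^card Z) = (if H = K then 1 else 0)"
    using alt_sum_Pow[of "K - H"] assms by simp
  finally show ?thesis .
qed


lemma sum_fun_apply: "(\<Sum>a\<in>A. f a) x = (\<Sum>a\<in>A. f a x)"
proof (cases "finite A")
  case True
  then show ?thesis by (induction rule: finite_induct) (auto simp: plus_fun_def)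
qed (simp add: zero_fun_def)

lemma fmod: "module (fscale :: 'k::field \<Rightarrow> ('x \<Rightarrow> 'k) \<Rightarrow> ('x \<Rightarrow> 'k))"
  by unfold_locales (auto simp: plus_fun_def algebra_simps)

definition mu_bool :: "'a set \<Rightarrow> 'a set \<Rightarrow> 'a set \<Rightarrow> 'k::comm_ring_1" where
  "mu_bool X x y = (if x \<subseteq> y \<and> y \<subseteq> X then (-1)^card (y - x) else 0)"

lemma is_mobius_mu_bool:
  assumes "finite X"
  shows "is_mobius (Pow X) (mu_bool X :: 'a set \<Rightarrow> 'a set \<Rightarrow> 'k::comm_ring_1)"
  unfolding is_mobius_def
proof (intro conjI ballI impI allI)
  fix x assume "x \<in> Pow X"
  then show "mu_bool X x x = (1::'k)" by (simp add: mu_bool_def)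
next
  fix x y assume xy: "x \<in> Pow X" "y \<in> Pow X" "x \<subset> y"
  have fy: "finite y" using xy assms finite_subset by auto
  have eq: "{z \<in> Pow X. x \<subseteq> z \<and> z \<subset> y} = {z. x \<subseteq> z \<and> z \<subseteq> y} - {y}" using xy by blast
  have fin: "finite {z. x \<subseteq> z \<and> z \<subseteq> y}" by (rule finite_subset[of _ "Pow y"]) (use fy in auto)
  have xny: "x \<noteq> y" "x \<subseteq> y" using xy by auto
  have "(\<Sum>z\<in>{z. x \<subseteq> z \<and> z \<subseteq> y}. (-1::'k)^card (z - x)) = (if x = y then 1 else 0)"
    by (rule interval_sum[OF fy xny(2)])
  also have "\<dots> = 0" using xny by simp
  finally have "(\<Sum>z\<in>{z. x \<subseteq> z \<and> z \<subseteq> y}. (-1::'k)^card (z - x)) = 0" .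
  moreover have "(\<Sum>z\<in>{z. x \<subseteq> z \<and> z \<subseteq> y}. (-1::'k)^card (z - x))
     = (-1::'k)^card (y - x) + (\<Sum>z\<in>{z. x \<subseteq> z \<and> z \<subseteq> y} - {y}. (-1::'k)^card (z - x))"
    by (rule sum.remove[OF fin]) (use xy in auto)
  moreover have "(\<Sum>z\<in>{z. x \<subseteq> z \<and> z \<subseteq> y} - {y}. mu_bool X x z) = (\<Sum>z\<in>{z. x \<subseteq> z \<and> z \<subseteq> y} - {y}. (-1::'k)^card (z - x))"
    by (rule sum.cong) (use xy in \<open>auto simp: mu_bool_def\<close>)
  ultimately show "mu_bool X x y = - (\<Sum>z\<in>{z \<in> Pow X. x \<subseteq> z \<and> z \<subset> y}. (mu_bool X x z :: 'k))"
    unfolding eq using xy by (simp add: mu_bool_def add_eq_0_iff)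
next
  fix x y assume "\<not> (x \<in> Pow X \<and> y \<in> Pow X \<and> x \<subseteq> y)"
  then show "mu_bool X x y = (0::'k)" by (auto simp: mu_bool_def)
qed

lemma is_mobius_unique:
  assumes "finite X" "is_mobius (Pow X) (m :: 'a set \<Rightarrow> 'a set \<Rightarrow> 'k::comm_ring_1)"
  shows "m = mu_bool X"
proof -
  have mm: "is_mobius (Pow X) (mu_bool X :: 'a set \<Rightarrow> 'a set \<Rightarrow> 'k)" by (rule is_mobius_mu_bool[OF assms(1)])
  have "\<forall>x. m x y = mu_bool X x y" for y
  proof (induction y rule: measure_induct_rule[where f=card])
    case (less y)
    show ?case
    proof
      fix x
      show "m x y = mu_bool X x y"
      proof (cases "x \<in> Pow X \<and> y \<in> Pow X \<and> x \<subseteq> y")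
        case False
        then show ?thesis using assms(2) mm unfolding is_mobius_def by metis
      next
        case True
        show ?thesis
        proof (cases "x = y")
          case True
          then show ?thesis using assms(2) mm \<open>x \<in> Pow X \<and> y \<in> Pow X \<and> x \<subseteq> y\<close>
            unfolding is_mobius_def by metis
        next
          case False
          then have psub: "x \<subset> y" using True by blast
          have fy: "finite y" using True assms(1) finite_subset by auto
          have "(\<Sum>z\<in>{z \<in> Pow X. x \<subseteq> z \<and> z \<subset> y}. m x z) = (\<Sum>z\<in>{z \<in> Pow X. x \<subseteq> z \<and> z \<subset> y}. mu_bool X x z)"
          proof (rule sum.cong)
            fix z assume "z \<in> {z \<in> Pow X. x \<subseteq> z \<and> z \<subset> y}"
            then have "card z < card y" using fy psubset_card_mono by auto
            then show "m x z = mu_bool X x z" using less by blast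
          qed simp
          moreover have "m x y = - (\<Sum>z\<in>{z \<in> Pow X. x \<subseteq> z \<and> z \<subset> y}. m x z)"
            using assms(2) True psub unfolding is_mobius_def by blast
          moreover have "mu_bool X x y = - (\<Sum>z\<in>{z \<in> Pow X. x \<subseteq> z \<and> z \<subset> y}. (mu_bool X x z :: 'k))"
            using mm True psub unfolding is_mobius_def by blast
          ultimately show ?thesis by simp
        qed
      qed
    qed
  qed
  then show ?thesis by blast
qed

lemma mobius_Pow:
  assumes "finite X"
  shows "mobius (Pow X) = (mu_bool X :: 'a set \<Rightarrow> 'a set \<Rightarrow> 'k::comm_ring_1)"
  unfolding mobius_def
  by (rule the_equality) (use is_mobius_mu_bool[OF assms] is_mobius_unique[OF assms] in auto)

lemma finite_hyperedges: "finite I \<Longrightarrow> finite (hyperedges I)"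
  unfolding hyperedges_def by (rule finite_subset[of _ "Pow I"]) auto

lemma omega_eq:
  assumes "finite I"
  shows "omega I G H = (if H \<subseteq> hyperedges I \<and> G \<subseteq> H then (-1::'k::field)^card (H - G) else 0)"
  unfolding omega_def HG_def mobius_Pow[OF finite_hyperedges[OF assms]] mu_bool_def by auto

definition phi :: "'a set \<Rightarrow> ('a set \<Rightarrow> 'k::comm_ring_1) \<Rightarrow> 'k" where
  "phi K v = (\<Sum>H\<in>Pow K. v H)"

lemma phi_omega:
  assumes "finite I" "K \<subseteq> hyperedges I"
  shows "phi K (omega I G :: _ \<Rightarrow> 'k::field) = (if G = K then 1 else 0)"
proof -
  have fK: "finite K" using assms finite_hyperedges finite_subset by blast
  have "phi K (omega I G :: _ \<Rightarrow> 'k) = (\<Sum>H\<in>Pow K. if G \<subseteq> H then (-1::'k)^card (H - G) else 0)"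
    unfolding phi_def omega_eq[OF assms(1)] by (rule sum.cong) (use assms(2) in auto)
  also have "\<dots> = (\<Sum>H\<in>{H \<in> Pow K. G \<subseteq> H}. (-1::'k)^card (H - G))"
    by (rule sum.inter_filter[symmetric]) (use fK in simp)
  also have "{H \<in> Pow K. G \<subseteq> H} = {H. G \<subseteq> H \<and> H \<subseteq> K}" by blast
  finally have *: "phi K (omega I G :: _ \<Rightarrow> 'k) = (\<Sum>H\<in>{H. G \<subseteq> H \<and> H \<subseteq> K}. (-1::'k)^card (H - G))" .
  show ?thesis
  proof (cases "G \<subseteq> K")
    case True
    then show ?thesis using * interval_sum[OF fK True] by simp
  next
    case False
    then have E: "{H. G \<subseteq> H \<and> H \<subseteq> K} = {}" and "G \<noteq> K" by blast+
    show ?thesis unfolding * E sum.empty using \<open>G \<noteq> K\<close> by simp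
  qed
qed

lemma kHG_zero: "v \<in> kHG I \<Longrightarrow> H \<notin> HG I \<Longrightarrow> v H = 0"
  unfolding kHG_def by blast

lemma expansion:
  assumes "finite I" "v \<in> kHG I"
  shows "v = (\<Sum>G\<in>Pow (hyperedges I). fscale (phi G v) (omega I G :: _ \<Rightarrow> 'k::field))"
proof
  fix K
  let ?X = "hyperedges I"
  have fX: "finite ?X" by (rule finite_hyperedges[OF assms(1)])
  have rhs: "(\<Sum>G\<in>Pow ?X. fscale (phi G v) (omega I G :: _ \<Rightarrow> 'k)) K
      = (\<Sum>G\<in>Pow ?X. phi G v * omega I G K)"
    by (simp add: sum_fun_apply)
  show "v K = (\<Sum>G\<in>Pow ?X. fscale (phi G v) (omega I G :: _ \<Rightarrow> 'k)) K"
  proof (cases "K \<subseteq> ?X")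
    case False
    then have "v K = 0" using kHG_zero[OF assms(2)] by (auto simp: HG_def)
    moreover have "(\<Sum>G\<in>Pow ?X. phi G v * omega I G K) = 0"
      by (rule sum.neutral) (use False in \<open>auto simp: omega_eq[OF assms(1)]\<close>)
    ultimately show ?thesis using rhs by simp
  next
    case True
    have fK: "finite K" using True fX finite_subset by blast
    have "(\<Sum>G\<in>Pow ?X. phi G v * omega I G K) = (\<Sum>G\<in>Pow ?X. if G \<subseteq> K then phi G v * (-1::'k)^card (K - G) else 0)"
      by (rule sum.cong) (use True in \<open>auto simp: omega_eq[OF assms(1)]\<close>)
    also have "\<dots> = (\<Sum>G\<in>{G \<in> Pow ?X. G \<subseteq> K}. phi G v * (-1::'k)^card (K - G))"
      by (rule sum.inter_filter[symmetric]) (use fX in simp)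
    also have "{G \<in> Pow ?X. G \<subseteq> K} = Pow K" using True by blast
    also have "(\<Sum>G\<in>Pow K. phi G v * (-1::'k)^card (K - G)) = (\<Sum>G\<in>Pow K. \<Sum>H\<in>{H \<in> Pow K. H \<subseteq> G}. v H * (-1::'k)^card (K - G))"
    proof (rule sum.cong)
      fix G assume "G \<in> Pow K"
      then have "{H \<in> Pow K. H \<subseteq> G} = Pow G" by blast
      then show "phi G v * (-1::'k)^card (K - G) = (\<Sum>H\<in>{H \<in> Pow K. H \<subseteq> G}. v H * (-1::'k)^card (K - G))"
        by (simp add: phi_def sum_distrib_right)
    qed simp
    also have "\<dots> = (\<Sum>H\<in>Pow K. \<Sum>G\<in>{G \<in> Pow K. H \<subseteq> G}. v H * (-1::'k)^card (K - G))"
      by (rule sum.swap_restrict) (use fK in simp_all)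
    also have "\<dots> = (\<Sum>H\<in>Pow K. v H * (if H = K then 1 else 0))"
    proof (rule sum.cong)
      fix H assume H: "H \<in> Pow K"
      have eq: "{G \<in> Pow K. H \<subseteq> G} = {G. H \<subseteq> G \<and> G \<subseteq> K}" by blast
      have "(\<Sum>G\<in>{G \<in> Pow K. H \<subseteq> G}. v H * (-1::'k)^card (K - G)) = v H * (\<Sum>G\<in>{G. H \<subseteq> G \<and> G \<subseteq> K}. (-1::'k)^card (K - G))"
        unfolding eq by (simp add: sum_distrib_left)
      also have "\<dots> = v H * (if H = K then 1 else 0)"
        by (subst interval_sum2[OF fK]) (use H in auto)
      finally show "(\<Sum>G\<in>{G \<in> Pow K. H \<subseteq> G}. v H * (-1::'k)^card (K - G)) = v H * (if H = K then 1 else 0)" .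
    qed simp
    also have "\<dots> = (\<Sum>H\<in>Pow K. if H = K then v H else 0)" by (rule sum.cong) auto
    also have "\<dots> = v K" using fK by (simp add: sum.delta)
    finally show ?thesis using rhs by simp
  qed
qed


lemma HG_finite: "finite I \<Longrightarrow> finite (HG I)"
  unfolding HG_def by (simp add: finite_hyperedges)

lemma hyperedges_mono: "S \<subseteq> I \<Longrightarrow> hyperedges S \<subseteq> hyperedges I"
  unfolding hyperedges_def by auto

lemma conn_cross:
  assumes "hg_connected I (hg_compl I G)" "S \<union> T = I" "S \<inter> T = {}" "S \<noteq> {}" "T \<noteq> {}"
  shows "\<exists>e \<in> hyperedges I - G. \<not> e \<subseteq> S \<and> \<not> e \<subseteq> T"
proof (rule ccontr)
  assume "\<not> ?thesis"
  then have A: "\<forall>e \<in> hyperedges I - G. e \<subseteq> S \<or> e \<subseteq> T" by blast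
  define E1 where "E1 = {e \<in> hyperedges I - G. e \<subseteq> S}"
  define E2 where "E2 = {e \<in> hyperedges I - G. e \<subseteq> T}"
  have "E1 \<in> HG S" "E2 \<in> HG T" unfolding E1_def E2_def HG_def hyperedges_def by auto
  moreover have "hg_compl I G = E1 \<union> E2" unfolding hg_compl_def E1_def E2_def using A by blast
  ultimately show False using assms unfolding hg_connected_def by blast
qed

lemma restrict_insert: "\<not> e \<subseteq> S \<Longrightarrow> hg_restrict (insert e H) S = hg_restrict H S"
  unfolding hg_restrict_def by auto

lemma restrict_remove: "\<not> e \<subseteq> S \<Longrightarrow> hg_restrict (H - {e}) S = hg_restrict H S"
  unfolding hg_restrict_def by auto

lemma omega_in_kHG: "omega I G \<in> kHG I"
  unfolding kHG_def omega_def by auto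

lemma coprod_apply: "coprod_ST I S T v (G1, G2) = (\<Sum>H\<in>{H \<in> HG I. hg_restrict H S = G1 \<and> hg_restrict H T = G2}. v H)"
  unfolding coprod_ST_def by simp

lemma omega_primitive:
  assumes fI: "finite I" and G: "hg_connected I (hg_compl I G)" "G \<subseteq> hyperedges I"
  shows "hg_primitive I (omega I G :: _ \<Rightarrow> 'k::field)"
  unfolding hg_primitive_def
proof (intro conjI allI impI omega_in_kHG)
  fix S T assume ST: "S \<union> T = I \<and> S \<inter> T = {} \<and> S \<noteq> {} \<and> T \<noteq> {}"
  have "\<exists>e \<in> hyperedges I - G. \<not> e \<subseteq> S \<and> \<not> e \<subseteq> T"
    using ST by (intro conn_cross[OF G(1)]) auto
  then obtain e where e: "e \<in> hyperedges I" "e \<notin> G" "\<not> e \<subseteq> S" "\<not> e \<subseteq> T"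
    by blast
  let ?X = "hyperedges I"
  have fX: "finite ?X" by (rule finite_hyperedges[OF fI])
  show "coprod_ST I S T (omega I G :: _ \<Rightarrow> 'k) = (\<lambda>_. 0)"
  proof
    fix y :: "'a set set \<times> 'a set set"
    obtain G1 G2 where y: "y = (G1, G2)" by (cases y)
    define A where "A = {H \<in> HG I. hg_restrict H S = G1 \<and> hg_restrict H T = G2}"
    have fA: "finite A" unfolding A_def using HG_finite[OF fI] by simp
    have Aeq: "A = {H \<in> A. e \<in> H} \<union> {H \<in> A. e \<notin> H}" by blast
    have "(\<Sum>H\<in>A. omega I G H :: 'k) = (\<Sum>H\<in>{H \<in> A. e \<in> H} \<union> {H \<in> A. e \<notin> H}. omega I G H)"
      by (rule arg_cong[where f="sum (omega I G)"], rule Aeq)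
    also have "\<dots> = (\<Sum>H\<in>{H \<in> A. e \<in> H}. omega I G H) + (\<Sum>H\<in>{H \<in> A. e \<notin> H}. omega I G H)"
      by (rule sum.union_disjoint) (use fA in auto)
    also have "(\<Sum>H\<in>{H \<in> A. e \<in> H}. omega I G H :: 'k) = (\<Sum>H\<in>{H \<in> A. e \<notin> H}. omega I G (insert e H))"
    proof (rule sum.reindex_bij_witness[where i="insert e" and j="\<lambda>H. H - {e}"])
      fix H assume "H \<in> {H \<in> A. e \<in> H}"
      then show "insert e (H - {e}) = H" by auto
    next
      fix H assume "H \<in> {H \<in> A. e \<in> H}"
      then show "H - {e} \<in> {H \<in> A. e \<notin> H}"
        unfolding A_def HG_def using restrict_remove[OF e(3)] restrict_remove[OF e(4)] by auto
    next
      fix H assume "H \<in> {H \<in> A. e \<notin> H}"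
      then show "insert e H - {e} = H" by auto
    next
      fix H assume "H \<in> {H \<in> A. e \<notin> H}"
      then show "insert e H \<in> {H \<in> A. e \<in> H}"
        unfolding A_def HG_def using restrict_insert[OF e(3)] restrict_insert[OF e(4)] e(1) by auto
    qed (simp add: insert_absorb)
    also have "\<dots> = (\<Sum>H\<in>{H \<in> A. e \<notin> H}. - omega I G H)"
    proof (rule sum.cong)
      fix H assume H: "H \<in> {H \<in> A. e \<notin> H}"
      then have HX: "H \<subseteq> ?X" unfolding A_def HG_def by auto
      have fH: "finite (H - G)" using HX fX finite_subset by blast
      have "insert e H - G = insert e (H - G)" using e(2) by blast
      then have c: "card (insert e H - G) = Suc (card (H - G))" using fH H by simp
      have "G \<subseteq> insert e H \<longleftrightarrow> G \<subseteq> H" using e(2) by blast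
      then show "omega I G (insert e H) = - (omega I G H :: 'k)"
        unfolding omega_eq[OF fI] using HX e(1) c by auto
    qed simp
    finally have "(\<Sum>H\<in>A. omega I G H :: 'k) = 0" by (simp add: sum_negf)
    then show "coprod_ST I S T (omega I G :: _ \<Rightarrow> 'k) y = 0"
      unfolding y coprod_apply A_def by simp
  qed
qed

lemma primitive_phi:
  assumes fI: "finite I" and p: "hg_primitive I (p :: _ \<Rightarrow> 'k::field)"
    and G: "G \<subseteq> hyperedges I" "\<not> hg_connected I (hg_compl I G)"
  shows "phi G p = 0"
proof -
  obtain S T E1 E2 where ST: "S \<noteq> {}" "T \<noteq> {}" "S \<inter> T = {}" "S \<union> T = I"
    "E1 \<in> HG S" "E2 \<in> HG T" "hg_compl I G = E1 \<union> E2"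
    using G(2) unfolding hg_connected_def by blast
  have cross: "e \<in> G" if "e \<in> hyperedges I" "\<not> e \<subseteq> S" "\<not> e \<subseteq> T" for e
  proof (rule ccontr)
    assume "e \<notin> G"
    then have "e \<in> E1 \<union> E2" using ST(7) that(1) unfolding hg_compl_def by blast
    then show False using ST(5,6) that unfolding HG_def hyperedges_def by auto
  qed
  have cz: "coprod_ST I S T p = (\<lambda>_. 0)" using p ST unfolding hg_primitive_def by blast
  define g where "g = (\<lambda>H. (hg_restrict H S, hg_restrict H T))"
  have fG: "finite (Pow G)" using G(1) finite_hyperedges[OF fI] finite_subset by blast
  have "phi G p = (\<Sum>y\<in>g ` Pow G. \<Sum>H\<in>{H. H \<in> Pow G \<and> g H = y}. p H)"
    unfolding phi_def by (rule sum.group[symmetric]) (use fG in auto)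
  also have "\<dots> = (\<Sum>y\<in>g ` Pow G. 0)"
  proof (rule sum.cong)
    fix y assume "y \<in> g ` Pow G"
    then obtain H0 where H0: "H0 \<subseteq> G" "y = g H0" by auto
    have eq: "{H. H \<in> Pow G \<and> g H = y} = {H \<in> HG I. hg_restrict H S = hg_restrict H0 S \<and> hg_restrict H T = hg_restrict H0 T}"
    proof (intro equalityI subsetI)
      fix H assume "H \<in> {H. H \<in> Pow G \<and> g H = y}"
      then show "H \<in> {H \<in> HG I. hg_restrict H S = hg_restrict H0 S \<and> hg_restrict H T = hg_restrict H0 T}"
        using G(1) H0 unfolding g_def HG_def by auto
    next
      fix H assume H: "H \<in> {H \<in> HG I. hg_restrict H S = hg_restrict H0 S \<and> hg_restrict H T = hg_restrict H0 T}"
      have "H \<subseteq> G"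
      proof
        fix e assume e: "e \<in> H"
        have eX: "e \<in> hyperedges I" using H e unfolding HG_def by auto
        show "e \<in> G"
        proof (cases "e \<subseteq> S")
          case True
          then have "e \<in> hg_restrict H S" using e unfolding hg_restrict_def by auto
          then show ?thesis using H H0(1) unfolding hg_restrict_def by auto
        next
          case nS: False
          show ?thesis
          proof (cases "e \<subseteq> T")
            case True
            then have "e \<in> hg_restrict H T" using e unfolding hg_restrict_def by auto
            then show ?thesis using H H0(1) unfolding hg_restrict_def by auto
          next
            case False
            then show ?thesis using cross eX nS by blast
          qed
        qed
      qed
      then show "H \<in> {H. H \<in> Pow G \<and> g H = y}" using H H0(2) unfolding g_def by auto
    qed
    show "(\<Sum>H\<in>{H. H \<in> Pow G \<and> g H = y}. p H) = 0"
      unfolding eq using fun_cong[OF cz, of "g H0"] unfolding g_def coprod_apply by simp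
  qed simp
  finally show ?thesis by simp
qed


lemma phi_lin:
  "phi K (\<Sum>w\<in>t. fscale (u w) w) = (\<Sum>w\<in>t. u w * phi K (w :: _ \<Rightarrow> 'k::field))"
proof -
  have "phi K (\<Sum>w\<in>t. fscale (u w) w) = (\<Sum>H\<in>Pow K. \<Sum>w\<in>t. u w * w H)"
    unfolding phi_def by (simp add: sum_fun_apply)
  also have "\<dots> = (\<Sum>w\<in>t. \<Sum>H\<in>Pow K. u w * w H)" by (rule sum.swap)
  also have "\<dots> = (\<Sum>w\<in>t. u w * phi K w)" unfolding phi_def by (simp add: sum_distrib_left)
  finally show ?thesis .
qed

lemma phi_zero: "phi K (0 :: _ \<Rightarrow> 'k::field) = 0"
  unfolding phi_def by simp

lemma coprod_ext: "(\<And>G1 G2. coprod_ST I S T v (G1, G2) = 0) \<Longrightarrow> coprod_ST I S T v = (\<lambda>_. 0)"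
  by (rule ext) (metis surj_pair)

lemma coprod_add_pt: "coprod_ST I S T (x + y) p = coprod_ST I S T x p + coprod_ST I S T y p"
  "coprod_ST I S T (0 :: _ \<Rightarrow> 'k::field) p = 0"
  by (cases p, simp add: coprod_apply sum.distrib)+

lemma coprod_scale_pt: "coprod_ST I S T (fscale c x) p = c * coprod_ST I S T (x :: _ \<Rightarrow> 'k::field) p"
  by (cases p) (simp add: coprod_apply sum_distrib_left)

lemma prim_subspace: "module.subspace fscale {p. hg_primitive I (p :: _ \<Rightarrow> 'k::field)}"
proof (rule module.subspaceI[OF fmod])
  show "0 \<in> {p. hg_primitive I (p :: _ \<Rightarrow> 'k)}"
    unfolding hg_primitive_def kHG_def mem_Collect_eq
  proof (intro conjI allI impI)
    fix S T
    show "coprod_ST I S T (0 :: _ \<Rightarrow> 'k) = (\<lambda>_. 0)"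
      by (rule ext) (simp add: coprod_add_pt)
  qed simp
next
  fix x y :: "_ \<Rightarrow> 'k" assume xy: "x \<in> {p. hg_primitive I p}" "y \<in> {p. hg_primitive I p}"
  show "x + y \<in> {p. hg_primitive I p}"
    unfolding mem_Collect_eq hg_primitive_def
  proof (intro conjI allI impI)
    show "x + y \<in> kHG I" unfolding kHG_def mem_Collect_eq
    proof (intro allI impI)
      fix H assume "(x + y) H \<noteq> 0"
      then have "x H \<noteq> 0 \<or> y H \<noteq> 0" by (metis add.left_neutral plus_fun_apply)
      moreover have "x \<in> kHG I" "y \<in> kHG I" using xy unfolding hg_primitive_def by simp_all
      ultimately show "H \<in> HG I" unfolding kHG_def by blast
    qed
  next
    fix S T assume ST: "S \<union> T = I \<and> S \<inter> T = {} \<and> S \<noteq> {} \<and> T \<noteq> {}"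
    have "coprod_ST I S T x = (\<lambda>_. 0)" "coprod_ST I S T y = (\<lambda>_. 0)"
      using xy ST unfolding hg_primitive_def mem_Collect_eq by blast+
    then show "coprod_ST I S T (x + y) = (\<lambda>_. 0)"
      by (intro ext) (simp add: coprod_add_pt)
  qed
next
  fix c :: 'k and x :: "_ \<Rightarrow> 'k" assume x: "x \<in> {p. hg_primitive I p}"
  show "fscale c x \<in> {p. hg_primitive I p}"
    unfolding mem_Collect_eq hg_primitive_def
  proof (intro conjI allI impI)
    show "fscale c x \<in> kHG I" using x unfolding hg_primitive_def kHG_def by simp
  next
    fix S T assume ST: "S \<union> T = I \<and> S \<inter> T = {} \<and> S \<noteq> {} \<and> T \<noteq> {}"
    have "coprod_ST I S T x = (\<lambda>_. 0)"
      using x ST unfolding hg_primitive_def mem_Collect_eq by blast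
    then show "coprod_ST I S T (fscale c x) = (\<lambda>_. 0)"
      by (intro ext) (simp add: coprod_scale_pt)
  qed
qed

lemma part1:
  fixes I :: "'v set"
  assumes fI: "finite I"
  defines "C \<equiv> {G \<in> HG I. hg_connected I (hg_compl I G)}"
  shows "inj_on (omega I :: _ \<Rightarrow> _ \<Rightarrow> 'k::field) C
       \<and> \<not> module.dependent fscale ((omega I :: _ \<Rightarrow> _ \<Rightarrow> 'k) ` C)
       \<and> module.span fscale ((omega I :: _ \<Rightarrow> _ \<Rightarrow> 'k) ` C) = {p. hg_primitive I p}"
proof (intro conjI)
  have phiom: "phi G (omega I G' :: _ \<Rightarrow> 'k) = (if G' = G then 1 else 0)" if "G \<in> C" for G G'
    using phi_omega[OF fI, of G G'] that unfolding C_def HG_def by auto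
  show inj: "inj_on (omega I :: _ \<Rightarrow> _ \<Rightarrow> 'k) C"
  proof (rule inj_onI)
    fix G G' assume "G \<in> C" "G' \<in> C" "(omega I G :: _ \<Rightarrow> 'k) = omega I G'"
    then show "G = G'" using phiom[of G G] phiom[of G G'] by (metis one_neq_zero)
  qed
  show "\<not> module.dependent fscale ((omega I :: _ \<Rightarrow> _ \<Rightarrow> 'k) ` C)"
    unfolding module.dependent_explicit[OF fmod]
  proof clarify
    fix t u v assume t: "finite t" "t \<subseteq> (omega I :: _ \<Rightarrow> _ \<Rightarrow> 'k) ` C"
      and s: "(\<Sum>v\<in>t. fscale (u v) v) = 0" and v: "v \<in> t" "u v \<noteq> 0"
    obtain G where G: "G \<in> C" "v = omega I G" using t v by auto
    have "0 = phi G (\<Sum>v\<in>t. fscale (u v) v)" using s phi_zero by simp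
    also have "\<dots> = (\<Sum>w\<in>t. u w * phi G w)" by (rule phi_lin)
    also have "\<dots> = (\<Sum>w\<in>t. if w = v then u w else 0)"
    proof (rule sum.cong)
      fix w assume "w \<in> t"
      then obtain G' where G': "G' \<in> C" "w = omega I G'" using t by auto
      have "w = v \<longleftrightarrow> G' = G"
      proof
        assume "w = v"
        then have "(omega I G' :: _ \<Rightarrow> 'k) = omega I G" using G G' by simp
        then show "G' = G" by (rule inj_onD[OF inj _ G'(1) G(1)])
      next
        assume "G' = G"
        then show "w = v" using G(2) G'(2) by (simp only:)
      qed
      then show "u w * phi G w = (if w = v then u w else 0)"
        using phiom[OF G(1), of G'] G' by simp
    qed simp
    also have "\<dots> = u v" using t(1) v(1) by (simp add: sum.delta')
    finally show False using v(2) by simp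
  qed
  show "module.span fscale ((omega I :: _ \<Rightarrow> _ \<Rightarrow> 'k) ` C) = {p. hg_primitive I p}"
  proof
    show "module.span fscale ((omega I :: _ \<Rightarrow> _ \<Rightarrow> 'k) ` C) \<subseteq> {p. hg_primitive I p}"
    proof (rule module.span_minimal[OF fmod _ prim_subspace])
      show "(omega I :: _ \<Rightarrow> _ \<Rightarrow> 'k) ` C \<subseteq> {p. hg_primitive I p}"
        using omega_primitive[OF fI] unfolding C_def HG_def by auto
    qed
  next
    show "{p. hg_primitive I p} \<subseteq> module.span fscale ((omega I :: _ \<Rightarrow> _ \<Rightarrow> 'k) ` C)"
    proof
      fix p :: "_ \<Rightarrow> 'k" assume p: "p \<in> {p. hg_primitive I p}"
      then have pk: "p \<in> kHG I" unfolding hg_primitive_def by auto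
      have fX: "finite (Pow (hyperedges I))" using finite_hyperedges[OF fI] by simp
      have CX: "C \<subseteq> Pow (hyperedges I)" unfolding C_def HG_def by auto
      have "p = (\<Sum>G\<in>Pow (hyperedges I). fscale (phi G p) (omega I G :: _ \<Rightarrow> 'k))"
        by (rule expansion[OF fI pk])
      also have "\<dots> = (\<Sum>G\<in>C. fscale (phi G p) (omega I G :: _ \<Rightarrow> 'k))"
      proof (rule sum.mono_neutral_right[OF fX CX])
        show "\<forall>G\<in>Pow (hyperedges I) - C. fscale (phi G p) (omega I G :: _ \<Rightarrow> 'k) = 0"
        proof
          fix G assume "G \<in> Pow (hyperedges I) - C"
          then have "phi G p = 0" using primitive_phi[OF fI, of p G] p unfolding C_def HG_def by auto
          then show "fscale (phi G p) (omega I G :: _ \<Rightarrow> 'k) = 0" by (simp add: zero_fun_def)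
        qed
      qed
      also have "\<dots> \<in> module.span fscale ((omega I :: _ \<Rightarrow> _ \<Rightarrow> 'k) ` C)"
        by (intro module.span_sum[OF fmod] module.span_scale[OF fmod] module.span_base[OF fmod]) auto
      finally show "p \<in> module.span fscale ((omega I :: _ \<Rightarrow> _ \<Rightarrow> 'k) ` C)" .
    qed
  qed
qed


lemma rl_comp: "image (g \<circ> f) ` E = image g ` (image f ` E)"
  by (simp add: image_comp image_image)

lemma rl_inv:
  assumes "E \<subseteq> Pow S" "inj_on f S"
  shows "image (inv_into S f) ` (image f ` E) = E"
proof -
  have "image (inv_into S f) (image f e) = e" if "e \<in> E" for e
  proof -
    have "e \<subseteq> S" using that assms(1) by auto
    then show ?thesis using assms(2) by (rule inv_into_image_cancel[rotated])
  qed
  then show ?thesis by (simp add: image_image)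
qed

lemma rl_cong:
  assumes "E \<subseteq> Pow S" "\<And>x. x \<in> S \<Longrightarrow> f x = g x"
  shows "image f ` E = image g ` E"
proof -
  have "image f e = image g e" if "e \<in> E" for e
    using that assms by (intro image_cong) auto
  then show ?thesis by (rule image_cong[OF refl])
qed

lemma HG_Pow: "E \<in> HG S \<Longrightarrow> E \<subseteq> Pow S"
  unfolding HG_def hyperedges_def by auto

lemma rl_HG:
  assumes "bij_betw f S S'" "E \<in> HG S"
  shows "image f ` E \<in> HG S'"
proof -
  have "image f e \<in> hyperedges S'" if "e \<in> E" for e
  proof -
    have e: "e \<subseteq> S" "2 \<le> card e" using that assms(2) unfolding HG_def hyperedges_def by auto
    have "inj_on f e" using e(1) assms(1) unfolding bij_betw_def by (blast intro: inj_on_subset)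
    then have "card (f ` e) = card e" by (rule card_image)
    moreover have "f ` e \<subseteq> S'" using e(1) assms(1) unfolding bij_betw_def by blast
    ultimately show ?thesis using e(2) unfolding hyperedges_def by simp
  qed
  then show ?thesis unfolding HG_def by blast
qed

lemma rl_inj:
  assumes "inj_on f S"
  shows "inj_on (\<lambda>E. image f ` E) (Pow (Pow S))"
  by (rule inj_on_image_Pow[OF inj_on_image_Pow[OF assms]])

lemma cl_of_eqI:
  assumes "bij_betw f S S'" "E \<subseteq> Pow S" "E' = image f ` E"
  shows "cl_of S E = cl_of S' E'"
proof -
  have card: "card S = card S'" using bij_betw_same_card[OF assms(1)] .
  have "{E'a. \<exists>g. bij_betw g S {1..card S} \<and> E'a = image g ` E}
      = {E'a. \<exists>g. bij_betw g S' {1..card S'} \<and> E'a = image g ` E'}"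
  proof (intro equalityI subsetI)
    fix x assume "x \<in> {E'a. \<exists>g. bij_betw g S {1..card S} \<and> E'a = image g ` E}"
    then obtain g where g: "bij_betw g S {1..card S}" "x = image g ` E" by blast
    have b: "bij_betw (g \<circ> inv_into S f) S' {1..card S'}"
      using bij_betw_trans[OF bij_betw_inv_into[OF assms(1)] g(1)] card by simp
    have "image (g \<circ> inv_into S f) ` E' = image g ` (image (inv_into S f) ` (image f ` E))"
      by (simp only: assms(3) rl_comp)
    also have "\<dots> = x" using rl_inv[OF assms(2) bij_betw_imp_inj_on[OF assms(1)]] g(2) by simp
    finally show "x \<in> {E'a. \<exists>g. bij_betw g S' {1..card S'} \<and> E'a = image g ` E'}"
      using b by blast
  next
    fix x assume "x \<in> {E'a. \<exists>g. bij_betw g S' {1..card S'} \<and> E'a = image g ` E'}"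
    then obtain g where g: "bij_betw g S' {1..card S'}" "x = image g ` E'" by blast
    have b: "bij_betw (g \<circ> f) S {1..card S}"
      using bij_betw_trans[OF assms(1) g(1)] card by simp
    have "x = image (g \<circ> f) ` E" by (simp only: g(2) assms(3) rl_comp)
    then show "x \<in> {E'a. \<exists>g. bij_betw g S {1..card S} \<and> E'a = image g ` E}"
      using b by blast
  qed
  then show ?thesis unfolding cl_of_def using card by simp
qed

lemma fst_cl_of[simp]: "fst (cl_of S E) = card S"
  unfolding cl_of_def by simp

lemma snd_cl_of: "snd (cl_of S E) = {E'. \<exists>f. bij_betw f S {1..card S} \<and> E' = image f ` E}"
  unfolding cl_of_def by simp

lemma cl_of_eqD:
  assumes "cl_of S E = cl_of S' E'" "finite S" "finite S'" "E \<subseteq> Pow S" "E' \<subseteq> Pow S'"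
  shows "\<exists>f. bij_betw f S S' \<and> E' = image f ` E"
proof -
  have card: "card S = card S'" using arg_cong[OF assms(1), of fst] by simp
  obtain g where g: "bij_betw g S {1..card S}"
    using finite_same_card_bij[OF assms(2), of "{1..card S}"] by auto
  have "image g ` E \<in> snd (cl_of S E)" unfolding snd_cl_of using g by blast
  then have "image g ` E \<in> snd (cl_of S' E')" using assms(1) by simp
  then have "\<exists>g'. bij_betw g' S' {1..card S'} \<and> image g ` E = image g' ` E'"
    unfolding snd_cl_of mem_Collect_eq .
  then obtain g' where g': "bij_betw g' S' {1..card S'}" "image g ` E = image g' ` E'"
    by blast
  define f where "f = inv_into S' g' \<circ> g"
  have bf: "bij_betw f S S'" unfolding f_def
    using bij_betw_trans[OF g bij_betw_inv_into[OF g'(1)[folded card]]] .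
  have "image f ` E = image (inv_into S' g') ` (image g ` E)" unfolding f_def by (simp only: rl_comp)
  also have "\<dots> = image (inv_into S' g') ` (image g' ` E')" using g'(2) by simp
  also have "\<dots> = E'" using rl_inv[OF assms(5) bij_betw_imp_inj_on[OF g'(1)]] by simp
  finally show ?thesis using bf by blast
qed

lemma cl_of_eq_iff:
  assumes "finite S" "finite S'" "E \<subseteq> Pow S" "E' \<subseteq> Pow S'"
  shows "cl_of S E = cl_of S' E' \<longleftrightarrow> (\<exists>f. bij_betw f S S' \<and> E' = image f ` E)"
proof
  assume "cl_of S E = cl_of S' E'"
  then show "\<exists>f. bij_betw f S S' \<and> E' = image f ` E" by (rule cl_of_eqD[OF _ assms])
next
  assume "\<exists>f. bij_betw f S S' \<and> E' = image f ` E"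
  then obtain f where "bij_betw f S S'" "E' = image f ` E" by blast
  then show "cl_of S E = cl_of S' E'" using cl_of_eqI assms(3) by blast
qed


lemma cl_in_fock:
  assumes "finite S" "E \<in> HG S"
  shows "cl_of S E \<in> fock_classes"
proof -
  obtain g where g: "bij_betw g S {1..card S}"
    using finite_same_card_bij[OF assms(1), of "{1..card S}"] by auto
  have "image g ` E \<in> HG {1..card S}" by (rule rl_HG[OF g assms(2)])
  moreover have "cl_of S E = cl_of {1..card S} (image g ` E)"
    by (rule cl_of_eqI[OF g HG_Pow[OF assms(2)] refl])
  ultimately show ?thesis unfolding fock_classes_def by blast
qed

lemma fock_classesE:
  assumes "c \<in> fock_classes"
  obtains E where "E \<in> HG {1..fst c}" "c = cl_of {1..fst c} E"
proof -
  obtain n E where nE: "c = cl_of {1..n} E" "E \<in> HG {1..n}" using assms unfolding fock_classes_def by blast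
  then have "fst c = n" by simp
  then show ?thesis using that[of E] nE by simp
qed

lemma snd_class_iff:
  assumes "E0 \<in> HG {1..n}"
  shows "H \<in> snd (cl_of {1..n} E0) \<longleftrightarrow> H \<in> HG {1..n} \<and> cl_of {1..n} H = cl_of {1..n} E0"
proof
  assume "H \<in> snd (cl_of {1..n} E0)"
  then have "\<exists>f. bij_betw f {1..n} {1..n} \<and> H = image f ` E0" unfolding snd_cl_of by simp
  then obtain f where f: "bij_betw f {1..n} {1..n}" "H = image f ` E0" by blast
  have "H \<in> HG {1..n}" using rl_HG[OF f(1) assms] f(2) by simp
  moreover have "cl_of {1..n} E0 = cl_of {1..n} H" by (rule cl_of_eqI[OF f(1) HG_Pow[OF assms] f(2)])
  ultimately show "H \<in> HG {1..n} \<and> cl_of {1..n} H = cl_of {1..n} E0" by simp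
next
  assume a: "H \<in> HG {1..n} \<and> cl_of {1..n} H = cl_of {1..n} E0"
  then have "\<exists>f. bij_betw f {1..n} {1..n} \<and> H = image f ` E0"
    using cl_of_eqD[of "{1..n}" E0 "{1..n}" H] HG_Pow[OF assms] HG_Pow[of H "{1..n}"] by simp
  then show "H \<in> snd (cl_of {1..n} E0)" unfolding snd_cl_of by simp
qed

lemma snd_class:
  assumes "c \<in> fock_classes"
  shows "snd c = {H \<in> HG {1..fst c}. cl_of {1..fst c} H = c}"
proof -
  obtain E where E: "E \<in> HG {1..fst c}" "c = cl_of {1..fst c} E" using fock_classesE[OF assms] by blast
  show ?thesis
  proof (intro equalityI subsetI)
    fix H assume "H \<in> snd c"
    then have "H \<in> snd (cl_of {1..fst c} E)" using E(2) by simp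
    then have "H \<in> HG {1..fst c} \<and> cl_of {1..fst c} H = cl_of {1..fst c} E" using snd_class_iff[OF E(1)] by blast
    then show "H \<in> {H \<in> HG {1..fst c}. cl_of {1..fst c} H = c}" using E(2) by simp
  next
    fix H assume "H \<in> {H \<in> HG {1..fst c}. cl_of {1..fst c} H = c}"
    then have "H \<in> HG {1..fst c} \<and> cl_of {1..fst c} H = cl_of {1..fst c} E" using E(2) by simp
    then have "H \<in> snd (cl_of {1..fst c} E)" using snd_class_iff[OF E(1)] by blast
    then show "H \<in> snd c" using E(2) by simp
  qed
qed

lemma self_in_class: "H \<in> HG {1..n} \<Longrightarrow> H \<in> snd (cl_of {1..n} H)"
  using snd_class_iff by blast

lemma finite_snd_class: "c \<in> fock_classes \<Longrightarrow> finite (snd c)"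
  using snd_class[of c] HG_finite[of "{1..fst c}"] by simp

lemma snd_class_ne: "c \<in> fock_classes \<Longrightarrow> snd c \<noteq> {}"
  by (metis empty_iff fock_classesE self_in_class)

lemma fock_rep:
  assumes "c \<in> fock_classes"
  shows "fock_rep c \<in> HG {1..fst c} \<and> cl_of {1..fst c} (fock_rep c) = c"
proof -
  obtain E where "E \<in> HG {1..fst c}" "c = cl_of {1..fst c} E" using fock_classesE[OF assms] by blast
  then have "\<exists>G. G \<in> HG {1..fst c} \<and> cl_of {1..fst c} G = c" by (intro exI[of _ E]) simp
  then show ?thesis unfolding fock_rep_def by (rule someI_ex)
qed

lemma classes_n: "{c \<in> fock_classes. fst c = n} = cl_of {1..n} ` HG {1..n}"
proof (intro equalityI subsetI)
  fix c assume "c \<in> {c \<in> fock_classes. fst c = n}"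
  then show "c \<in> cl_of {1..n} ` HG {1..n}" using fock_classesE[of c] by blast
next
  fix c assume "c \<in> cl_of {1..n} ` HG {1..n}"
  then show "c \<in> {c \<in> fock_classes. fst c = n}" using cl_in_fock[of "{1..n}"] by auto
qed

lemma finite_classes_n: "finite {c \<in> fock_classes. fst c = n}"
  unfolding classes_n using HG_finite[of "{1..n}"] by simp

lemma cls_sum_filter: "(\<Sum>H\<in>{H \<in> HG {1..n}. cl_of {1..n} H = c}. v H) = cls n v c"
proof (cases "c \<in> fock_classes \<and> fst c = n")
  case True
  then show ?thesis unfolding cls_def using snd_class[of c] by simp
next
  case False
  have E: "{H \<in> HG {1..n}. cl_of {1..n} H = c} = {}"
  proof (rule ccontr)
    assume "{H \<in> HG {1..n}. cl_of {1..n} H = c} \<noteq> {}"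
    then obtain H where "H \<in> HG {1..n}" "cl_of {1..n} H = c" by blast
    then show False using False cl_in_fock[of "{1..n}" H] by auto
  qed
  show ?thesis unfolding E cls_def if_not_P[OF False] by simp
qed

lemma inj_on_img_sub:
  assumes "inj_on f C" "A \<subseteq> C" "B \<subseteq> C"
  shows "f ` A \<subseteq> f ` B \<longleftrightarrow> A \<subseteq> B"
proof
  assume a: "f ` A \<subseteq> f ` B"
  show "A \<subseteq> B"
  proof
    fix x assume x: "x \<in> A"
    then have "f x \<in> f ` B" using a by blast
    then show "x \<in> B" using inj_on_image_mem_iff[OF assms(1) _ assms(3)] assms(2) x by blast
  qed
qed blast

lemma restrict_rl:
  assumes "inj_on \<sigma> A" "H \<subseteq> Pow A" "S \<subseteq> A"
  shows "hg_restrict (image \<sigma> ` H) (\<sigma> ` S) = image \<sigma> ` (hg_restrict H S)"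
proof -
  have "\<sigma> ` e \<subseteq> \<sigma> ` S \<longleftrightarrow> e \<subseteq> S" if "e \<in> H" for e
    using inj_on_img_sub[OF assms(1)] that assms(2,3) by blast
  then show ?thesis unfolding hg_restrict_def by blast
qed

definition Nn :: "nat \<Rightarrow> nat set set \<Rightarrow> hgclass \<Rightarrow> hgclass \<Rightarrow> nat" where
  "Nn n H c1 c2 = card {S. S \<subseteq> {1..n} \<and> cl_of S (hg_restrict H S) = c1
          \<and> cl_of ({1..n} - S) (hg_restrict H ({1..n} - S)) = c2}"

lemma restrict_Pow: "H \<subseteq> Pow A \<Longrightarrow> hg_restrict H S \<subseteq> Pow S"
  unfolding hg_restrict_def by auto

lemma Nn_mono:
  assumes s: "bij_betw \<sigma> {1..n} {1..n}" and H: "H \<in> HG {1..n}"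
  shows "Nn n H c1 c2 \<le> Nn n (image \<sigma> ` H) c1 c2"
proof -
  let ?A = "\<lambda>H. {S. S \<subseteq> {1..n} \<and> cl_of S (hg_restrict H S) = c1
          \<and> cl_of ({1..n} - S) (hg_restrict H ({1..n} - S)) = c2}"
  have inj: "inj_on \<sigma> {1..n}" using s by (rule bij_betw_imp_inj_on)
  have HP: "H \<subseteq> Pow {1..n}" by (rule HG_Pow[OF H])
  have "image \<sigma> ` ?A H \<subseteq> ?A (image \<sigma> ` H)"
  proof
    fix S' assume "S' \<in> image \<sigma> ` ?A H"
    then obtain S where S: "S \<in> ?A H" "S' = \<sigma> ` S" by blast
    have Ssub: "S \<subseteq> {1..n}" using S(1) by simp
    have "\<sigma> ` ({1..n} - S) = \<sigma> ` {1..n} - \<sigma> ` S"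
      by (rule inj_on_image_set_diff[OF inj]) (use Ssub in auto)
    then have compl: "{1..n} - \<sigma> ` S = \<sigma> ` ({1..n} - S)"
      using bij_betw_imp_surj_on[OF s] by simp
    have b1: "bij_betw \<sigma> S (\<sigma> ` S)" using inj Ssub by (simp add: bij_betw_def inj_on_subset)
    have b2: "bij_betw \<sigma> ({1..n} - S) (\<sigma> ` ({1..n} - S))" using inj by (simp add: bij_betw_def inj_on_subset)
    have r1: "hg_restrict (image \<sigma> ` H) (\<sigma> ` S) = image \<sigma> ` (hg_restrict H S)"
      by (rule restrict_rl[OF inj HP Ssub])
    have r2: "hg_restrict (image \<sigma> ` H) (\<sigma> ` ({1..n} - S)) = image \<sigma> ` (hg_restrict H ({1..n} - S))"
      by (rule restrict_rl[OF inj HP]) auto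
    have e1: "cl_of (\<sigma> ` S) (hg_restrict (image \<sigma> ` H) (\<sigma> ` S)) = cl_of S (hg_restrict H S)"
      unfolding r1 by (rule cl_of_eqI[OF b1 restrict_Pow[OF HP] refl, symmetric])
    have e2: "cl_of (\<sigma> ` ({1..n} - S)) (hg_restrict (image \<sigma> ` H) (\<sigma> ` ({1..n} - S))) = cl_of ({1..n} - S) (hg_restrict H ({1..n} - S))"
      unfolding r2 by (rule cl_of_eqI[OF b2 restrict_Pow[OF HP] refl, symmetric])
    have "\<sigma> ` S \<subseteq> {1..n}" using s Ssub unfolding bij_betw_def by blast
    then show "S' \<in> ?A (image \<sigma> ` H)" using S e1 e2 compl by simp
  qed
  moreover have "inj_on (image \<sigma>) (?A H)"
    using inj_on_image_Pow[OF inj] by (rule inj_on_subset) auto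
  moreover have "finite (?A (image \<sigma> ` H))" by (rule finite_subset[of _ "Pow {1..n}"]) auto
  ultimately show ?thesis unfolding Nn_def by (intro card_inj_on_le)
qed

lemma Nn_inv:
  assumes s: "bij_betw \<sigma> {1..n} {1..n}" and H: "H \<in> HG {1..n}"
  shows "Nn n (image \<sigma> ` H) c1 c2 = Nn n H c1 c2"
proof (rule antisym)
  show "Nn n H c1 c2 \<le> Nn n (image \<sigma> ` H) c1 c2" by (rule Nn_mono[OF s H])
  have s': "bij_betw (inv_into {1..n} \<sigma>) {1..n} {1..n}" by (rule bij_betw_inv_into[OF s])
  have "Nn n (image \<sigma> ` H) c1 c2 \<le> Nn n (image (inv_into {1..n} \<sigma>) ` (image \<sigma> ` H)) c1 c2"
    by (rule Nn_mono[OF s' rl_HG[OF s H]])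
  also have "image (inv_into {1..n} \<sigma>) ` (image \<sigma> ` H) = H"
    by (rule rl_inv[OF HG_Pow[OF H] bij_betw_imp_inj_on[OF s]])
  finally show "Nn n (image \<sigma> ` H) c1 c2 \<le> Nn n H c1 c2" .
qed


lemma fock_delta_apply:
  "fock_delta h (c1, c2) = (\<Sum>c\<in>{c \<in> fock_classes. h c \<noteq> 0}. h c * of_nat (Nn (fst c) (fock_rep c) c1 c2))"
  unfolding fock_delta_def Nn_def by simp

lemma Nn_class:
  assumes "H \<in> HG {1..n}" "H' \<in> HG {1..n}" "cl_of {1..n} H = cl_of {1..n} H'"
  shows "Nn n H' c1 c2 = Nn n H c1 c2"
proof -
  obtain \<sigma> where s: "bij_betw \<sigma> {1..n} {1..n}" "H' = image \<sigma> ` H"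
    using cl_of_eqD[OF assms(3) _ _ HG_Pow[OF assms(1)] HG_Pow[OF assms(2)]] by auto
  show ?thesis unfolding s(2) by (rule Nn_inv[OF s(1) assms(1)])
qed

lemma delta_cls:
  "fock_delta (cls n v) (c1, c2) = (\<Sum>H\<in>HG {1..n}. v H * of_nat (Nn n H c1 c2))"
proof -
  let ?h = "cls n v"
  let ?Cn = "{c \<in> fock_classes. fst c = n}"
  have sub: "{c \<in> fock_classes. ?h c \<noteq> 0} \<subseteq> ?Cn" unfolding cls_def by (auto split: if_splits)
  have "fock_delta ?h (c1, c2) = (\<Sum>c\<in>{c \<in> fock_classes. ?h c \<noteq> 0}. ?h c * of_nat (Nn (fst c) (fock_rep c) c1 c2))"
    by (rule fock_delta_apply)
  also have "\<dots> = (\<Sum>c\<in>?Cn. ?h c * of_nat (Nn (fst c) (fock_rep c) c1 c2))"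
    by (rule sum.mono_neutral_left[OF finite_classes_n sub]) auto
  also have "\<dots> = (\<Sum>c\<in>?Cn. \<Sum>H\<in>{H \<in> HG {1..n}. cl_of {1..n} H = c}. v H * of_nat (Nn n H c1 c2))"
  proof (rule sum.cong[OF refl])
    fix c assume c: "c \<in> ?Cn"
    then have r: "fock_rep c \<in> HG {1..n}" "cl_of {1..n} (fock_rep c) = c" using fock_rep[of c] by auto
    have "?h c * of_nat (Nn (fst c) (fock_rep c) c1 c2) = (\<Sum>H\<in>{H \<in> HG {1..n}. cl_of {1..n} H = c}. v H) * of_nat (Nn n (fock_rep c) c1 c2)"
      using c cls_sum_filter[where n=n and c=c and v=v] by simp
    also have "\<dots> = (\<Sum>H\<in>{H \<in> HG {1..n}. cl_of {1..n} H = c}. v H * of_nat (Nn n (fock_rep c) c1 c2))"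
      by (rule sum_distrib_right)
    also have "\<dots> = (\<Sum>H\<in>{H \<in> HG {1..n}. cl_of {1..n} H = c}. v H * of_nat (Nn n H c1 c2))"
    proof (rule sum.cong[OF refl])
      fix H assume "H \<in> {H \<in> HG {1..n}. cl_of {1..n} H = c}"
      then have "Nn n H c1 c2 = Nn n (fock_rep c) c1 c2"
        using Nn_class[OF r(1), of H] r(2) by simp
      then show "v H * of_nat (Nn n (fock_rep c) c1 c2) = v H * of_nat (Nn n H c1 c2)" by simp
    qed
    finally show "?h c * of_nat (Nn (fst c) (fock_rep c) c1 c2) = (\<Sum>H\<in>{H \<in> HG {1..n}. cl_of {1..n} H = c}. v H * of_nat (Nn n H c1 c2))" .
  qed
  also have "\<dots> = (\<Sum>H\<in>HG {1..n}. v H * of_nat (Nn n H c1 c2))"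
  proof -
    have "cl_of {1..n} ` HG {1..n} \<subseteq> ?Cn" using classes_n by blast
    then have "(\<Sum>c\<in>?Cn. \<Sum>H\<in>{H. H \<in> HG {1..n} \<and> cl_of {1..n} H = c}. v H * of_nat (Nn n H c1 c2)) = (\<Sum>H\<in>HG {1..n}. v H * of_nat (Nn n H c1 c2))"
      by (intro sum.group HG_finite finite_classes_n) auto
    then show ?thesis by simp
  qed
  finally show ?thesis .
qed

lemma Nn_sum:
  "(of_nat (Nn n H c1 c2) :: 'k::field) = (\<Sum>S\<in>Pow {1..n}. if cl_of S (hg_restrict H S) = c1
          \<and> cl_of ({1..n} - S) (hg_restrict H ({1..n} - S)) = c2 then 1 else 0)"
proof -
  have "{S. S \<subseteq> {1..n} \<and> cl_of S (hg_restrict H S) = c1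
          \<and> cl_of ({1..n} - S) (hg_restrict H ({1..n} - S)) = c2}
      = {S \<in> Pow {1..n}. cl_of S (hg_restrict H S) = c1
          \<and> cl_of ({1..n} - S) (hg_restrict H ({1..n} - S)) = c2}" by blast
  then show ?thesis unfolding Nn_def
    by (simp add: sum.inter_filter[symmetric])
qed

lemma delta_cls_S:
  "fock_delta (cls n v) (c1, c2) = (\<Sum>S\<in>Pow {1..n}. \<Sum>H\<in>HG {1..n}.
      if cl_of S (hg_restrict H S) = c1 \<and> cl_of ({1..n} - S) (hg_restrict H ({1..n} - S)) = c2
      then v H else (0::'k::field))"
proof -
  have "fock_delta (cls n v) (c1, c2) = (\<Sum>H\<in>HG {1..n}. \<Sum>S\<in>Pow {1..n}.
      if cl_of S (hg_restrict H S) = c1 \<and> cl_of ({1..n} - S) (hg_restrict H ({1..n} - S)) = c2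
      then v H else (0::'k))"
    unfolding delta_cls Nn_sum by (simp add: sum_distrib_left if_distrib cong: if_cong)
  also have "\<dots> = (\<Sum>S\<in>Pow {1..n}. \<Sum>H\<in>HG {1..n}.
      if cl_of S (hg_restrict H S) = c1 \<and> cl_of ({1..n} - S) (hg_restrict H ({1..n} - S)) = c2
      then v H else (0::'k))"
    by (rule sum.swap)
  finally show ?thesis .
qed


lemma restrict_empty: "H \<in> HG I \<Longrightarrow> hg_restrict H {} = {}"
  unfolding hg_restrict_def HG_def hyperedges_def by force

lemma restrict_full: "H \<in> HG I \<Longrightarrow> hg_restrict H I = H"
  unfolding hg_restrict_def HG_def hyperedges_def by auto

lemma sum_if_filter:
  assumes "finite A"
  shows "(\<Sum>H\<in>A. if Q \<and> P H then v H else (0::'k::field)) = (if Q then (\<Sum>H\<in>{H \<in> A. P H}. v H) else 0)"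
  using assms by (cases Q) (simp_all add: sum.inter_filter)

lemma D_group:
  fixes v :: "nat set set \<Rightarrow> 'k::field"
  assumes "S \<subseteq> {1..n}"
  shows "(\<Sum>H\<in>HG {1..n}. if cl_of S (hg_restrict H S) = c1 \<and> cl_of ({1..n} - S) (hg_restrict H ({1..n} - S)) = c2 then v H else 0)
    = (\<Sum>y\<in>(\<lambda>H. (hg_restrict H S, hg_restrict H ({1..n} - S))) ` HG {1..n}.
         if cl_of S (fst y) = c1 \<and> cl_of ({1..n} - S) (snd y) = c2 then coprod_ST {1..n} S ({1..n} - S) v y else 0)"
proof -
  let ?g = "\<lambda>H. (hg_restrict H S, hg_restrict H ({1..n} - S))"
  let ?f = "\<lambda>H. if cl_of S (hg_restrict H S) = c1 \<and> cl_of ({1..n} - S) (hg_restrict H ({1..n} - S)) = c2 then v H else 0"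
  have "(\<Sum>H\<in>HG {1..n}. ?f H) = (\<Sum>y\<in>?g ` HG {1..n}. \<Sum>H\<in>{H. H \<in> HG {1..n} \<and> ?g H = y}. ?f H)"
    by (rule sum.group[symmetric]) (auto intro: HG_finite)
  also have "\<dots> = (\<Sum>y\<in>?g ` HG {1..n}.
         if cl_of S (fst y) = c1 \<and> cl_of ({1..n} - S) (snd y) = c2 then coprod_ST {1..n} S ({1..n} - S) v y else 0)"
  proof (rule sum.cong[OF refl])
    fix y :: "nat set set \<times> nat set set"
    obtain a b where y: "y = (a, b)" by (cases y)
    have "(\<Sum>H\<in>{H. H \<in> HG {1..n} \<and> ?g H = y}. ?f H) = (\<Sum>H\<in>{H. H \<in> HG {1..n} \<and> ?g H = y}.
        if cl_of S a = c1 \<and> cl_of ({1..n} - S) b = c2 then v H else 0)"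
      by (rule sum.cong[OF refl]) (auto simp: y)
    also have "\<dots> = (if cl_of S a = c1 \<and> cl_of ({1..n} - S) b = c2 then (\<Sum>H\<in>{H. H \<in> HG {1..n} \<and> ?g H = y}. v H) else 0)"
    proof (cases "cl_of S a = c1 \<and> cl_of ({1..n} - S) b = c2")
      case True
      show ?thesis unfolding if_P[OF True] ..
    next
      case False
      show ?thesis unfolding if_not_P[OF False] by simp
    qed
    also have "{H. H \<in> HG {1..n} \<and> ?g H = y} = {H \<in> HG {1..n}. hg_restrict H S = a \<and> hg_restrict H ({1..n} - S) = b}"
      unfolding y by auto
    finally show "(\<Sum>H\<in>{H. H \<in> HG {1..n} \<and> ?g H = y}. ?f H) =
         (if cl_of S (fst y) = c1 \<and> cl_of ({1..n} - S) (snd y) = c2 then coprod_ST {1..n} S ({1..n} - S) v y else 0)"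
      unfolding y coprod_apply by simp
  qed
  finally show ?thesis .
qed

definition one_c :: hgclass where "one_c = cl_of {} {}"

lemma fock_one_eq: "fock_one c = (if c = one_c then 1 else 0)"
  unfolding fock_one_def one_c_def ..

lemma delta_prim:
  fixes v :: "nat set set \<Rightarrow> 'k::field"
  assumes n: "1 \<le> n" and p: "hg_primitive {1..n} v"
  shows "fock_delta (cls n v) (c1, c2) = cls n v c1 * fock_one c2 + fock_one c1 * cls n v c2"
proof -
  let ?D = "\<lambda>S. (\<Sum>H\<in>HG {1..n}. if cl_of S (hg_restrict H S) = c1 \<and> cl_of ({1..n} - S) (hg_restrict H ({1..n} - S)) = c2 then v H else 0)"
  have ne: "{} \<noteq> {1..n}" using n by auto
  have "fock_delta (cls n v) (c1, c2) = (\<Sum>S\<in>Pow {1..n}. ?D S)" by (rule delta_cls_S)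
  also have "\<dots> = (\<Sum>S\<in>{{}, {1..n}}. ?D S)"
  proof (rule sum.mono_neutral_right)
    show "\<forall>S\<in>Pow {1..n} - {{}, {1..n}}. ?D S = 0"
    proof
      fix S assume S: "S \<in> Pow {1..n} - {{}, {1..n}}"
      then have Ss: "S \<subseteq> {1..n}" "S \<noteq> {}" "{1..n} - S \<noteq> {}" by auto
      have "S \<union> ({1..n} - S) = {1..n} \<and> S \<inter> ({1..n} - S) = {} \<and> S \<noteq> {} \<and> {1..n} - S \<noteq> {}"
        using Ss by auto
      then have cz: "coprod_ST {1..n} S ({1..n} - S) v = (\<lambda>_. 0)"
        using p unfolding hg_primitive_def by blast
      show "?D S = 0" unfolding D_group[OF Ss(1)] cz by simp
    qed
  qed auto
  also have "\<dots> = ?D {} + ?D {1..n}" using ne by simp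
  also have "?D {} = fock_one c1 * cls n v c2"
  proof -
    have "?D {} = (\<Sum>H\<in>HG {1..n}. if one_c = c1 \<and> cl_of {1..n} H = c2 then v H else 0)"
      by (rule sum.cong[OF refl]) (simp add: restrict_empty restrict_full one_c_def)
    also have "\<dots> = (if one_c = c1 then cls n v c2 else 0)"
      unfolding sum_if_filter[OF HG_finite[OF finite_atLeastAtMost]] cls_sum_filter ..
    finally show ?thesis by (auto simp: fock_one_eq)
  qed
  also have "?D {1..n} = cls n v c1 * fock_one c2"
  proof -
    have "?D {1..n} = (\<Sum>H\<in>HG {1..n}. if one_c = c2 \<and> cl_of {1..n} H = c1 then v H else 0)"
      by (rule sum.cong[OF refl]) (auto simp: restrict_empty restrict_full one_c_def)
    also have "\<dots> = (if one_c = c2 then cls n v c1 else 0)"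
      unfolding sum_if_filter[OF HG_finite[OF finite_atLeastAtMost]] cls_sum_filter ..
    finally show ?thesis by (auto simp: fock_one_eq)
  qed
  finally show ?thesis by simp
qed


definition Kc :: "hgclass \<Rightarrow> hgclass \<Rightarrow> hgclass \<Rightarrow> 'k::field" where
  "Kc c c1 c2 = of_nat (Nn (fst c) (fock_rep c) c1 c2)"

lemma fock_space_supp: "h \<in> fock_space \<Longrightarrow> {c \<in> fock_classes. h c \<noteq> 0} = {c. h c \<noteq> 0}"
  unfolding fock_space_def by auto

lemma fock_delta_on:
  assumes h: "h \<in> fock_space" and F: "finite F" "{c. h c \<noteq> 0} \<subseteq> F"
  shows "fock_delta h (c1, c2) = (\<Sum>c\<in>F. h c * Kc c c1 c2)"
  unfolding fock_delta_apply fock_space_supp[OF h] Kc_def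
  by (rule sum.mono_neutral_left[OF F]) auto

lemma cls_in_fock: "cls n v \<in> fock_space"
proof -
  have "{c. cls n v c \<noteq> 0} \<subseteq> {c \<in> fock_classes. fst c = n}" unfolding cls_def by (auto split: if_splits)
  then show ?thesis unfolding fock_space_def using finite_classes_n[of n] finite_subset by blast
qed

lemma fock_space_add: "x \<in> fock_space \<Longrightarrow> y \<in> fock_space \<Longrightarrow> x + y \<in> fock_space"
proof -
  assume x: "x \<in> fock_space" and y: "y \<in> fock_space"
  have sub: "{c. (x + y) c \<noteq> 0} \<subseteq> {c. x c \<noteq> 0} \<union> {c. y c \<noteq> 0}" by auto
  have "finite {c. (x + y) c \<noteq> 0}"
    using x y unfolding fock_space_def by (intro finite_subset[OF sub]) auto
  moreover have "\<forall>c. (x + y) c \<noteq> 0 \<longrightarrow> c \<in> fock_classes"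
    using x y sub unfolding fock_space_def by blast
  ultimately show ?thesis unfolding fock_space_def by blast
qed

lemma fock_space_scale: "x \<in> fock_space \<Longrightarrow> fscale c x \<in> fock_space"
proof -
  assume x: "x \<in> fock_space"
  have sub: "{d. c * x d \<noteq> 0} \<subseteq> {d. x d \<noteq> 0}" by auto
  show ?thesis using x finite_subset[OF sub] sub unfolding fock_space_def by blast
qed

lemma fock_space_zero: "0 \<in> fock_space"
  unfolding fock_space_def by simp

lemma fock_prim_subspace: "module.subspace fscale {h. fock_primitive (h :: hgclass \<Rightarrow> 'k::field)}"
proof (rule module.subspaceI[OF fmod])
  show "0 \<in> {h. fock_primitive (h :: hgclass \<Rightarrow> 'k)}"
    unfolding mem_Collect_eq fock_primitive_def
  proof (intro conjI fock_space_zero ext)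
    fix p :: "hgclass \<times> hgclass"
    obtain c1 c2 where p: "p = (c1, c2)" by (cases p)
    show "fock_delta (0 :: hgclass \<Rightarrow> 'k) p = (case p of (c1, c2) \<Rightarrow> 0 c1 * fock_one c2 + fock_one c1 * 0 c2)"
      unfolding p fock_delta_apply by simp
  qed
next
  fix x y :: "hgclass \<Rightarrow> 'k" assume xy: "x \<in> {h. fock_primitive h}" "y \<in> {h. fock_primitive h}"
  have xs: "x \<in> fock_space" and ys: "y \<in> fock_space" using xy unfolding fock_primitive_def by auto
  show "x + y \<in> {h. fock_primitive h}"
    unfolding mem_Collect_eq fock_primitive_def
  proof (intro conjI fock_space_add[OF xs ys] ext)
    fix p :: "hgclass \<times> hgclass"
    obtain c1 c2 where p: "p = (c1, c2)" by (cases p)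
    let ?F = "{c. x c \<noteq> 0} \<union> {c. y c \<noteq> 0}"
    have fF: "finite ?F" using xs ys unfolding fock_space_def by auto
    have "fock_delta (x + y) (c1, c2) = (\<Sum>c\<in>?F. (x + y) c * Kc c c1 c2)"
      by (rule fock_delta_on[OF fock_space_add[OF xs ys] fF]) auto
    also have "\<dots> = (\<Sum>c\<in>?F. x c * Kc c c1 c2) + (\<Sum>c\<in>?F. y c * Kc c c1 c2)"
      by (simp add: distrib_right sum.distrib)
    also have "(\<Sum>c\<in>?F. x c * Kc c c1 c2) = fock_delta x (c1, c2)"
      by (rule fock_delta_on[OF xs fF, symmetric]) auto
    also have "(\<Sum>c\<in>?F. y c * Kc c c1 c2) = fock_delta y (c1, c2)"
      by (rule fock_delta_on[OF ys fF, symmetric]) auto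
    also have "fock_delta x (c1, c2) + fock_delta y (c1, c2)
       = (x c1 * fock_one c2 + fock_one c1 * x c2) + (y c1 * fock_one c2 + fock_one c1 * y c2)"
      using xy unfolding fock_primitive_def by simp
    finally have "fock_delta (x + y) (c1, c2) = (x c1 * fock_one c2 + fock_one c1 * x c2) + (y c1 * fock_one c2 + fock_one c1 * y c2)" .
    then show "fock_delta (x + y) p = (case p of (c1, c2) \<Rightarrow> (x + y) c1 * fock_one c2 + fock_one c1 * (x + y) c2)"
      unfolding p by (simp add: algebra_simps)
  qed
next
  fix a :: 'k and x :: "hgclass \<Rightarrow> 'k" assume x: "x \<in> {h. fock_primitive h}"
  have xs: "x \<in> fock_space" using x unfolding fock_primitive_def by auto
  show "fscale a x \<in> {h. fock_primitive h}"
    unfolding mem_Collect_eq fock_primitive_def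
  proof (intro conjI fock_space_scale[OF xs] ext)
    fix p :: "hgclass \<times> hgclass"
    obtain c1 c2 where p: "p = (c1, c2)" by (cases p)
    let ?F = "{c. x c \<noteq> 0}"
    have fF: "finite ?F" using xs unfolding fock_space_def by auto
    have "fock_delta (fscale a x) (c1, c2) = (\<Sum>c\<in>?F. (a * x c) * Kc c c1 c2)"
      by (rule fock_delta_on[OF fock_space_scale[OF xs] fF]) auto
    also have "\<dots> = a * (\<Sum>c\<in>?F. x c * Kc c c1 c2)"
      by (simp add: sum_distrib_left mult.assoc)
    also have "(\<Sum>c\<in>?F. x c * Kc c c1 c2) = fock_delta x (c1, c2)"
      by (rule fock_delta_on[OF xs fF, symmetric]) auto
    also have "fock_delta x (c1, c2) = x c1 * fock_one c2 + fock_one c1 * x c2"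
      using x unfolding fock_primitive_def by simp
    finally show "fock_delta (fscale a x) p = (case p of (c1, c2) \<Rightarrow> (a * x c1) * fock_one c2 + fock_one c1 * (a * x c2))"
      unfolding p by (simp add: algebra_simps)
  qed
qed

lemma cls_prim:
  assumes "1 \<le> n" "hg_primitive {1..n} (v :: _ \<Rightarrow> 'k::field)"
  shows "fock_primitive (cls n v)"
  unfolding fock_primitive_def
proof (intro conjI cls_in_fock ext)
  fix p :: "hgclass \<times> hgclass"
  obtain c1 c2 where p: "p = (c1, c2)" by (cases p)
  show "fock_delta (cls n v) p = (case p of (c1, c2) \<Rightarrow> cls n v c1 * fock_one c2 + fock_one c1 * cls n v c2)"
    unfolding p using delta_prim[OF assms] by simp
qed

lemma span_sub_prim:
  "module.span fscale {cls n (omega {1..n} G :: nat set set \<Rightarrow> 'k::field) | n G.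
              1 \<le> n \<and> G \<in> HG {1..n} \<and> hg_connected {1..n} (hg_compl {1..n} G)}
   \<subseteq> {h. fock_primitive h}"
proof (rule module.span_minimal[OF fmod _ fock_prim_subspace])
  show "{cls n (omega {1..n} G :: nat set set \<Rightarrow> 'k) | n G.
              1 \<le> n \<and> G \<in> HG {1..n} \<and> hg_connected {1..n} (hg_compl {1..n} G)} \<subseteq> {h. fock_primitive h}"
  proof
    fix x assume "x \<in> {cls n (omega {1..n} G :: nat set set \<Rightarrow> 'k) | n G.
              1 \<le> n \<and> G \<in> HG {1..n} \<and> hg_connected {1..n} (hg_compl {1..n} G)}"
    then obtain n G where nG: "x = cls n (omega {1..n} G)" "1 \<le> n" "G \<in> HG {1..n}"
        "hg_connected {1..n} (hg_compl {1..n} G)" by blast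
    have "hg_primitive {1..n} (omega {1..n} G :: nat set set \<Rightarrow> 'k)"
      using omega_primitive[of "{1..n}" G] nG(3,4) unfolding HG_def by auto
    then show "x \<in> {h. fock_primitive h}" using cls_prim[OF nG(2)] nG(1) by simp
  qed
qed


definition hn :: "(hgclass \<Rightarrow> 'k::field) \<Rightarrow> nat \<Rightarrow> hgclass \<Rightarrow> 'k" where
  "hn h n = (\<lambda>c. if fst c = n then h c else 0)"

definition wn :: "(hgclass \<Rightarrow> 'k::field) \<Rightarrow> nat \<Rightarrow> nat set set \<Rightarrow> 'k" where
  "wn h n H = (if H \<in> HG {1..n} then h (cl_of {1..n} H) / of_nat (card (snd (cl_of {1..n} H))) else 0)"

lemma hn_cls:
  assumes h: "h \<in> fock_space"
  shows "cls n (wn h n :: _ \<Rightarrow> 'k::field_char_0) = hn h n"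
proof
  fix c
  show "cls n (wn h n) c = hn h n c"
  proof (cases "c \<in> fock_classes \<and> fst c = n")
    case True
    then have c: "c \<in> fock_classes" "fst c = n" by auto
    have sc: "snd c = {H \<in> HG {1..n}. cl_of {1..n} H = c}" using snd_class[OF c(1)] c(2) by simp
    have "(\<Sum>H\<in>snd c. wn h n H) = (\<Sum>H\<in>snd c. h c / of_nat (card (snd c)))"
      by (rule sum.cong[OF refl]) (use sc in \<open>auto simp: wn_def\<close>)
    also have "\<dots> = of_nat (card (snd c)) * (h c / of_nat (card (snd c)))" by simp
    also have "\<dots> = h c"
      using finite_snd_class[OF c(1)] snd_class_ne[OF c(1)] by simp
    finally show ?thesis unfolding cls_def hn_def using True by simp
  next
    case False
    have hc: "h c = 0" if "c \<notin> fock_classes" using h that unfolding fock_space_def by blast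
    have "hn h n c = 0"
    proof (cases "fst c = n")
      case True
      then have "c \<notin> fock_classes" using False by blast
      then show ?thesis using hc unfolding hn_def by simp
    qed (simp add: hn_def)
    then show ?thesis unfolding cls_def if_not_P[OF False] by simp
  qed
qed

lemma hn_in_fock: "h \<in> fock_space \<Longrightarrow> hn h n \<in> fock_space"
proof -
  assume h: "h \<in> fock_space"
  have sub: "{c. hn h n c \<noteq> 0} \<subseteq> {c. h c \<noteq> 0}" unfolding hn_def by auto
  show ?thesis using h finite_subset[OF sub] sub unfolding fock_space_def by blast
qed

lemma Nn_nonzero:
  assumes "Nn m H c1 c2 \<noteq> 0"
  shows "m = fst c1 + fst c2"
proof -
  obtain S where S: "S \<subseteq> {1..m}" "cl_of S (hg_restrict H S) = c1"
    "cl_of ({1..m} - S) (hg_restrict H ({1..m} - S)) = c2"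
  proof -
    have "{S. S \<subseteq> {1..m} \<and> cl_of S (hg_restrict H S) = c1
          \<and> cl_of ({1..m} - S) (hg_restrict H ({1..m} - S)) = c2} \<noteq> {}"
      using assms unfolding Nn_def by (metis card.empty)
    then show ?thesis using that by blast
  qed
  have "fst c1 = card S" "fst c2 = card ({1..m} - S)" using S(2,3) by auto
  moreover have "card ({1..m} - S) = m - card S" using S(1) by (simp add: card_Diff_subset finite_subset)
  moreover have "card S \<le> m" using S(1) card_mono[of "{1..m}" S] by simp
  ultimately show ?thesis by simp
qed

lemma delta_hn:
  assumes h: "h \<in> fock_space" and n: "fst c1 + fst c2 = n"
  shows "fock_delta h (c1, c2) = fock_delta (hn h n) (c1, c2)"
proof -
  let ?F = "{c. h c \<noteq> 0}"
  have fF: "finite ?F" using h unfolding fock_space_def by auto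
  have "fock_delta h (c1, c2) = (\<Sum>c\<in>?F. h c * Kc c c1 c2)" by (rule fock_delta_on[OF h fF]) auto
  also have "\<dots> = (\<Sum>c\<in>?F. hn h n c * Kc c c1 c2)"
  proof (rule sum.cong[OF refl])
    fix c
    show "h c * Kc c c1 c2 = hn h n c * Kc c c1 c2"
    proof (cases "fst c = n")
      case False
      then have "Nn (fst c) (fock_rep c) c1 c2 = 0" using Nn_nonzero n by blast
      then show ?thesis unfolding Kc_def by simp
    qed (simp add: hn_def)
  qed
  also have "\<dots> = fock_delta (hn h n) (c1, c2)"
    by (rule fock_delta_on[OF hn_in_fock[OF h] fF, symmetric]) (auto simp: hn_def)
  finally show ?thesis .
qed

lemma fst_one_c[simp]: "fst one_c = 0" unfolding one_c_def by simp

lemma HG_empty: "HG {} = {{}}"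
  unfolding HG_def hyperedges_def by auto

lemma h_one:
  assumes p: "fock_primitive (h :: hgclass \<Rightarrow> 'k::field_char_0)"
  shows "h one_c = 0"
proof -
  have h: "h \<in> fock_space" using p unfolding fock_primitive_def by simp
  have e: "{1..0::nat} = {}" by simp
  have N: "Nn 0 {} one_c one_c = 1"
  proof -
    have "{S. S \<subseteq> {1..0} \<and> cl_of S (hg_restrict {} S) = one_c
          \<and> cl_of ({1..0} - S) (hg_restrict {} ({1..0} - S)) = one_c} = {{}}"
      unfolding e one_c_def hg_restrict_def by auto
    then show ?thesis unfolding Nn_def by simp
  qed
  have "fock_delta h (one_c, one_c) = fock_delta (hn h 0) (one_c, one_c)"
    by (rule delta_hn[OF h]) simp
  also have "\<dots> = fock_delta (cls 0 (wn h 0)) (one_c, one_c)" using hn_cls[OF h, of 0] by simp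
  also have "\<dots> = (\<Sum>H\<in>HG {1..0}. wn h 0 H * of_nat (Nn 0 H one_c one_c))" by (rule delta_cls)
  also have "\<dots> = wn h 0 {}" unfolding e HG_empty using N by simp
  also have "\<dots> = cls 0 (wn h 0) one_c"
  proof -
    have "{H \<in> HG {1..0}. cl_of {1..0} H = one_c} = {{}}" unfolding e HG_empty one_c_def by auto
    then show ?thesis using cls_sum_filter[where n=0 and v="wn h 0" and c=one_c] by simp
  qed
  also have "\<dots> = h one_c" using hn_cls[OF h, of 0] unfolding hn_def by (metis fst_one_c)
  finally have "fock_delta h (one_c, one_c) = h one_c" .
  moreover have "fock_delta h (one_c, one_c) = h one_c + h one_c"
    using p unfolding fock_primitive_def fock_one_eq by simp
  ultimately show ?thesis by simp
qed

lemma bij_filter: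
  assumes "bij_betw \<phi> U U" "\<And>x. x \<in> U \<Longrightarrow> P (\<phi> x) \<longleftrightarrow> Q x"
  shows "bij_betw \<phi> {x \<in> U. Q x} {y \<in> U. P y}"
  unfolding bij_betw_def
proof
  show "inj_on \<phi> {x \<in> U. Q x}" using assms(1) unfolding bij_betw_def by (rule inj_on_subset[OF conjunct1]) auto
  show "\<phi> ` {x \<in> U. Q x} = {y \<in> U. P y}"
  proof (intro equalityI subsetI)
    fix y assume "y \<in> \<phi> ` {x \<in> U. Q x}"
    then show "y \<in> {y \<in> U. P y}" using assms bij_betw_imp_surj_on[OF assms(1)] by auto
  next
    fix y assume y: "y \<in> {y \<in> U. P y}"
    then obtain x where "x \<in> U" "y = \<phi> x" using bij_betw_imp_surj_on[OF assms(1)] by auto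
    then show "y \<in> \<phi> ` {x \<in> U. Q x}" using y assms(2) by auto
  qed
qed

lemma rl_bij:
  fixes n :: nat
  assumes "bij_betw \<sigma> {1..n} {1..n}"
  shows "bij_betw (\<lambda>H. image \<sigma> ` H) (HG {1..n}) (HG {1..n})"
proof -
  have inj: "inj_on (\<lambda>H. image \<sigma> ` H) (HG {1..n})"
    using rl_inj[OF bij_betw_imp_inj_on[OF assms]] by (rule inj_on_subset) (auto dest: HG_Pow)
  have sub: "(\<lambda>H. image \<sigma> ` H) ` HG {1..n} \<subseteq> HG {1..n}" using rl_HG[OF assms] by blast
  have "(\<lambda>H. image \<sigma> ` H) ` HG {1..n} = HG {1..n}"
  proof -
    have "finite (HG {1..n})" by (rule HG_finite) simp
    then show ?thesis by (rule endo_inj_surj[OF _ sub inj])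
  qed
  then show ?thesis using inj unfolding bij_betw_def by blast
qed

lemma wn_inv:
  assumes "bij_betw \<sigma> {1..n} {1..n}" "H \<in> HG {1..n}"
  shows "wn h n (image \<sigma> ` H) = wn h n H"
proof -
  have "image \<sigma> ` H \<in> HG {1..n}" by (rule rl_HG[OF assms])
  moreover have "cl_of {1..n} (image \<sigma> ` H) = cl_of {1..n} H"
    by (rule cl_of_eqI[OF assms(1) HG_Pow[OF assms(2)] refl, symmetric])
  ultimately show ?thesis unfolding wn_def using assms(2) by simp
qed


lemma coprod_inv:
  fixes n :: nat and w :: "nat set set \<Rightarrow> 'k::field"
  assumes winv: "\<And>\<sigma> H. bij_betw \<sigma> {1..n} {1..n} \<Longrightarrow> H \<in> HG {1..n} \<Longrightarrow> w (image \<sigma> ` H) = w H"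
    and S: "S \<subseteq> {1..n}" and S': "S' \<subseteq> {1..n}"
    and G: "G1 \<in> HG S" "G2 \<in> HG ({1..n} - S)" "G1' \<in> HG S'" "G2' \<in> HG ({1..n} - S')"
    and e1: "cl_of S G1 = cl_of S' G1'" and e2: "cl_of ({1..n} - S) G2 = cl_of ({1..n} - S') G2'"
  shows "coprod_ST {1..n} S' ({1..n} - S') w (G1', G2') = coprod_ST {1..n} S ({1..n} - S) w (G1, G2)"
proof -
  let ?T = "{1..n} - S" and ?T' = "{1..n} - S'"
  have fin: "finite S" "finite S'" "finite ?T" "finite ?T'" using S S' finite_subset by auto
  obtain f1 where f1: "bij_betw f1 S S'" "G1' = image f1 ` G1"
    using cl_of_eqD[OF e1 fin(1,2) HG_Pow[OF G(1)] HG_Pow[OF G(3)]] by blast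
  obtain f2 where f2: "bij_betw f2 ?T ?T'" "G2' = image f2 ` G2"
    using cl_of_eqD[OF e2 fin(3,4) HG_Pow[OF G(2)] HG_Pow[OF G(4)]] by blast
  define \<sigma> where "\<sigma> = (\<lambda>x. if x \<in> S then f1 x else f2 x)"
  have b1: "bij_betw \<sigma> S S'" using f1(1) by (subst bij_betw_cong[where g=f1]) (auto simp: \<sigma>_def)
  have b2: "bij_betw \<sigma> ?T ?T'" using f2(1) by (subst bij_betw_cong[where g=f2]) (auto simp: \<sigma>_def)
  have "bij_betw \<sigma> (S \<union> ?T) (S' \<union> ?T')" by (rule bij_betw_combine[OF b1 b2]) blast
  moreover have "S \<union> ?T = {1..n}" "S' \<union> ?T' = {1..n}" using S S' by auto
  ultimately have bs: "bij_betw \<sigma> {1..n} {1..n}" by simp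
  have inj: "inj_on \<sigma> {1..n}" by (rule bij_betw_imp_inj_on[OF bs])
  have r1: "image \<sigma> ` G1 = G1'" unfolding f1(2)
    by (rule rl_cong[OF HG_Pow[OF G(1)]]) (simp add: \<sigma>_def)
  have r2: "image \<sigma> ` G2 = G2'" unfolding f2(2)
    by (rule rl_cong[OF HG_Pow[OF G(2)]]) (simp add: \<sigma>_def)
  have i1: "\<sigma> ` S = S'" by (rule bij_betw_imp_surj_on[OF b1])
  have i2: "\<sigma> ` ?T = ?T'" by (rule bij_betw_imp_surj_on[OF b2])
  have rinj: "inj_on (\<lambda>E. image \<sigma> ` E) (Pow (Pow {1..n}))" by (rule rl_inj[OF inj])
  have G1P: "G1 \<in> Pow (Pow {1..n})" "G2 \<in> Pow (Pow {1..n})"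
    using HG_Pow[OF G(1)] HG_Pow[OF G(2)] S by auto
  let ?A = "{H \<in> HG {1..n}. hg_restrict H S = G1 \<and> hg_restrict H ?T = G2}"
  let ?A' = "{H \<in> HG {1..n}. hg_restrict H S' = G1' \<and> hg_restrict H ?T' = G2'}"
  have bA: "bij_betw (\<lambda>H. image \<sigma> ` H) ?A ?A'"
  proof (rule bij_filter[OF rl_bij[OF bs]])
    fix H assume H: "H \<in> HG {1..n}"
    have HP: "H \<subseteq> Pow {1..n}" by (rule HG_Pow[OF H])
    have q1: "hg_restrict (image \<sigma> ` H) S' = image \<sigma> ` (hg_restrict H S)"
      unfolding i1[symmetric] by (rule restrict_rl[OF inj HP S])
    have q2: "hg_restrict (image \<sigma> ` H) ?T' = image \<sigma> ` (hg_restrict H ?T)"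
      unfolding i2[symmetric] by (rule restrict_rl[OF inj HP]) auto
    have m1: "hg_restrict H S \<in> Pow (Pow {1..n})" "hg_restrict H ?T \<in> Pow (Pow {1..n})"
      using HP unfolding hg_restrict_def by auto
    have "image \<sigma> ` (hg_restrict H S) = G1' \<longleftrightarrow> hg_restrict H S = G1"
      unfolding r1[symmetric] using inj_onD[OF rinj _ m1(1) G1P(1)] by blast
    moreover have "image \<sigma> ` (hg_restrict H ?T) = G2' \<longleftrightarrow> hg_restrict H ?T = G2"
      unfolding r2[symmetric] using inj_onD[OF rinj _ m1(2) G1P(2)] by blast
    ultimately show "(hg_restrict (image \<sigma> ` H) S' = G1' \<and> hg_restrict (image \<sigma> ` H) ?T' = G2')
        \<longleftrightarrow> (hg_restrict H S = G1 \<and> hg_restrict H ?T = G2)"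
      unfolding q1 q2 by blast
  qed
  have "coprod_ST {1..n} S' ?T' w (G1', G2') = (\<Sum>H\<in>?A'. w H)" by (rule coprod_apply)
  also have "\<dots> = (\<Sum>H\<in>?A. w (image \<sigma> ` H))" by (rule sum.reindex_bij_betw[OF bA, symmetric])
  also have "\<dots> = (\<Sum>H\<in>?A. w H)" by (rule sum.cong[OF refl]) (use winv[OF bs] in auto)
  also have "\<dots> = coprod_ST {1..n} S ?T w (G1, G2)" by (rule coprod_apply[symmetric])
  finally show ?thesis .
qed

lemma restrict_HG: "H \<in> HG I \<Longrightarrow> hg_restrict H S \<in> HG S"
  unfolding hg_restrict_def HG_def hyperedges_def by auto


lemma union_restrict:
  assumes "G1 \<in> HG S" "G2 \<in> HG T" "S \<inter> T = {}"
  shows "hg_restrict (G1 \<union> G2) S = G1" "hg_restrict (G1 \<union> G2) T = G2"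
proof -
  have a: "U \<subseteq> S \<and> U \<noteq> {}" if "U \<in> G1" for U
  proof -
    have "U \<subseteq> S \<and> 2 \<le> card U" using that assms(1) unfolding HG_def hyperedges_def by blast
    then show ?thesis by (metis card.empty not_numeral_le_zero)
  qed
  have b: "U \<subseteq> T \<and> U \<noteq> {}" if "U \<in> G2" for U
  proof -
    have "U \<subseteq> T \<and> 2 \<le> card U" using that assms(2) unfolding HG_def hyperedges_def by blast
    then show ?thesis by (metis card.empty not_numeral_le_zero)
  qed
  show "hg_restrict (G1 \<union> G2) S = G1"
    unfolding hg_restrict_def using a b assms(3) by blast
  show "hg_restrict (G1 \<union> G2) T = G2"
    unfolding hg_restrict_def using a b assms(3) by blast
qed

lemma w_prim:
  fixes h :: "hgclass \<Rightarrow> 'k::field_char_0"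
  assumes p: "fock_primitive h" and n: "1 \<le> n"
  shows "hg_primitive {1..n} (wn h n)"
  unfolding hg_primitive_def
proof (intro conjI allI impI)
  show "wn h n \<in> kHG {1..n}" unfolding kHG_def wn_def by auto
  have h: "h \<in> fock_space" using p unfolding fock_primitive_def by simp
  fix S T assume ST: "S \<union> T = {1..n} \<and> S \<inter> T = {} \<and> S \<noteq> {} \<and> T \<noteq> {}"
  then have T: "T = {1..n} - S" and S: "S \<subseteq> {1..n}" "S \<noteq> {}" "T \<noteq> {}" by auto
  let ?w = "wn h n"
  show "coprod_ST {1..n} S T ?w = (\<lambda>_. 0)"
  proof (rule coprod_ext)
    fix G1 G2
    show "coprod_ST {1..n} S T ?w (G1, G2) = 0"
    proof (cases "G1 \<in> HG S \<and> G2 \<in> HG T")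
      case False
      have E: "{H \<in> HG {1..n}. hg_restrict H S = G1 \<and> hg_restrict H T = G2} = {}"
        using False restrict_HG by blast
      show ?thesis unfolding coprod_apply E by simp
    next
      case True
      then have G: "G1 \<in> HG S" "G2 \<in> HG ({1..n} - S)" using T by auto
      let ?x = "coprod_ST {1..n} S ({1..n} - S) ?w (G1, G2)"
      let ?c1 = "cl_of S G1" and ?c2 = "cl_of ({1..n} - S) G2"
      have fS: "finite S" "finite ({1..n} - S)" using S finite_subset by auto
      have c1: "?c1 \<noteq> one_c" using S(2) fS(1) by (metis card_0_eq fst_cl_of fst_one_c)
      have c2: "?c2 \<noteq> one_c" using S(3) fS(2) T by (metis card_0_eq fst_cl_of fst_one_c)
      have cS: "card S \<le> n" using card_mono[OF _ S(1)] by simp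
      have sumn: "fst ?c1 + fst ?c2 = n"
        using S(1) cS by (simp add: card_Diff_subset fS(1))
      let ?Y = "\<lambda>S'. (\<lambda>H. (hg_restrict H S', hg_restrict H ({1..n} - S'))) ` HG {1..n}"
      let ?P = "\<lambda>S' y. cl_of S' (fst y) = ?c1 \<and> cl_of ({1..n} - S') (snd y) = ?c2"
      define M where "M = (\<Sum>S'\<in>Pow {1..n}. card {y \<in> ?Y S'. ?P S' y})"
      have "0 = h ?c1 * fock_one ?c2 + fock_one ?c1 * h ?c2" using c1 c2 by (simp add: fock_one_eq)
      also have "\<dots> = fock_delta h (?c1, ?c2)" using p unfolding fock_primitive_def by simp
      also have "\<dots> = fock_delta (hn h n) (?c1, ?c2)" by (rule delta_hn[OF h sumn])
      also have "\<dots> = fock_delta (cls n ?w) (?c1, ?c2)" using hn_cls[OF h, of n] by simp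
      also have "\<dots> = (\<Sum>S'\<in>Pow {1..n}. \<Sum>y\<in>?Y S'. if ?P S' y then coprod_ST {1..n} S' ({1..n} - S') ?w y else 0)"
        unfolding delta_cls_S by (rule sum.cong[OF refl]) (rule D_group, blast)
      also have "\<dots> = (\<Sum>S'\<in>Pow {1..n}. \<Sum>y\<in>?Y S'. if ?P S' y then ?x else 0)"
      proof (intro sum.cong[OF refl])
        fix S' y assume S': "S' \<in> Pow {1..n}" and y: "y \<in> ?Y S'"
        obtain H0 where H0: "H0 \<in> HG {1..n}" "y = (hg_restrict H0 S', hg_restrict H0 ({1..n} - S'))"
          using y by blast
        show "(if ?P S' y then coprod_ST {1..n} S' ({1..n} - S') ?w y else 0) = (if ?P S' y then ?x else 0)"
        proof (cases "?P S' y")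
          case True
          have "coprod_ST {1..n} S' ({1..n} - S') ?w y = ?x"
            unfolding H0(2)
          proof (rule coprod_inv[OF _ S(1) _ G])
            show "S' \<subseteq> {1..n}" using S' by simp
            show "hg_restrict H0 S' \<in> HG S'" "hg_restrict H0 ({1..n} - S') \<in> HG ({1..n} - S')"
              by (rule restrict_HG[OF H0(1)])+
            show "cl_of S G1 = cl_of S' (hg_restrict H0 S')"
              "cl_of ({1..n} - S) G2 = cl_of ({1..n} - S') (hg_restrict H0 ({1..n} - S'))"
              using True H0(2) by simp_all
          qed (rule wn_inv)
          then show ?thesis unfolding if_P[OF True] .
        next
          case False
          show ?thesis unfolding if_not_P[OF False] ..
        qed
      qed
      also have "\<dots> = (\<Sum>S'\<in>Pow {1..n}. of_nat (card {y \<in> ?Y S'. ?P S' y}) * ?x)"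
      proof (rule sum.cong[OF refl])
        fix S' assume "S' \<in> Pow {1..n}"
        have fY: "finite (?Y S')" by (rule finite_imageI, rule HG_finite) simp
        show "(\<Sum>y\<in>?Y S'. if ?P S' y then ?x else 0) = of_nat (card {y \<in> ?Y S'. ?P S' y}) * ?x"
          by (subst sum.inter_filter[OF fY, symmetric]) (rule sum_constant)
      qed
      also have "\<dots> = of_nat M * ?x" unfolding M_def by (simp add: of_nat_sum sum_distrib_right)
      finally have eq0: "of_nat M * ?x = 0" by simp
      have "1 \<le> card {y \<in> ?Y S. ?P S y}"
      proof -
        have "G1 \<union> G2 \<in> HG {1..n}"
          using G hyperedges_mono[OF S(1)] hyperedges_mono[of "{1..n} - S" "{1..n}"] unfolding HG_def by blast
        moreover have "hg_restrict (G1 \<union> G2) S = G1" "hg_restrict (G1 \<union> G2) ({1..n} - S) = G2"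
          using union_restrict[OF G] by auto
        ultimately have "(G1, G2) \<in> ?Y S"
          by (intro image_eqI[where x="G1 \<union> G2"]) simp_all
        then have mem: "(G1, G2) \<in> {y \<in> ?Y S. ?P S y}" by simp
        have fin: "finite {y \<in> ?Y S. ?P S y}"
        proof (rule finite_subset[of _ "?Y S"])
          show "finite (?Y S)" by (rule finite_imageI, rule HG_finite) simp
        qed blast
        have "0 < card {y \<in> ?Y S. ?P S y}" using fin mem card_gt_0_iff by blast
        then show ?thesis by simp
      qed
      also have "card {y \<in> ?Y S. ?P S y} \<le> M" unfolding M_def
        by (rule member_le_sum) (use S(1) in auto)
      finally have "M \<noteq> 0" by simp
      then have "?x = 0" using eq0 by simp
      then show ?thesis using T by simp
    qed
  qed
qed


lemma cls_lin: "cls n (\<Sum>a\<in>t. fscale (r a) a) = (\<Sum>a\<in>t. fscale (r a) (cls n (a :: _ \<Rightarrow> 'k::field)))"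
proof
  fix c
  show "cls n (\<Sum>a\<in>t. fscale (r a) a) c = (\<Sum>a\<in>t. fscale (r a) (cls n a)) c"
  proof (cases "c \<in> fock_classes \<and> fst c = n")
    case True
    have "cls n (\<Sum>a\<in>t. fscale (r a) a) c = (\<Sum>H\<in>snd c. \<Sum>a\<in>t. r a * a H)"
      unfolding cls_def if_P[OF True] by (simp add: sum_fun_apply)
    also have "\<dots> = (\<Sum>a\<in>t. r a * (\<Sum>H\<in>snd c. a H))" by (subst sum.swap) (simp add: sum_distrib_left)
    also have "\<dots> = (\<Sum>a\<in>t. fscale (r a) (cls n a)) c"
      unfolding cls_def sum_fun_apply if_P[OF True] ..
    finally show ?thesis .
  next
    case False
    show ?thesis unfolding cls_def sum_fun_apply if_not_P[OF False] by simp
  qed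
qed

lemma cls_span:
  assumes "x \<in> module.span fscale A"
  shows "cls n x \<in> module.span fscale (cls n ` (A :: (_ \<Rightarrow> 'k::field) set))"
proof -
  obtain t r where t: "finite t" "t \<subseteq> A" "x = (\<Sum>a\<in>t. fscale (r a) a)"
    using assms unfolding module.span_explicit[OF fmod] by blast
  have "cls n x = (\<Sum>a\<in>t. fscale (r a) (cls n a))" unfolding t(3) by (rule cls_lin)
  also have "\<dots> \<in> module.span fscale (cls n ` A)"
    using t(2) by (intro module.span_sum[OF fmod] module.span_scale[OF fmod] module.span_base[OF fmod]) auto
  finally show ?thesis .
qed

lemma fst_zero_class:
  assumes "c \<in> fock_classes" "fst c = 0"
  shows "c = one_c"
proof -
  obtain E where E: "E \<in> HG {1..fst c}" "c = cl_of {1..fst c} E" using fock_classesE[OF assms(1)] by blast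
  have e: "{1..fst c} = {}" using assms(2) by simp
  have "E = {}" using E(1) unfolding e HG_empty by simp
  then show ?thesis using E(2) unfolding e one_c_def by simp
qed

lemma prim_sub_span:
  assumes p: "fock_primitive (h :: hgclass \<Rightarrow> 'k::field_char_0)"
  shows "h \<in> module.span fscale
           {cls n (omega {1..n} G :: nat set set \<Rightarrow> 'k) | n G.
              1 \<le> n \<and> G \<in> HG {1..n} \<and> hg_connected {1..n} (hg_compl {1..n} G)}"
    (is "_ \<in> module.span fscale ?B")
proof -
  have h: "h \<in> fock_space" using p unfolding fock_primitive_def by simp
  define Ns where "Ns = fst ` {c. h c \<noteq> 0}"
  have fN: "finite Ns" using h unfolding Ns_def fock_space_def by simp
  have heq: "h = (\<Sum>n\<in>Ns. hn h n)"
  proof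
    fix c
    have "(\<Sum>n\<in>Ns. hn h n) c = (\<Sum>n\<in>Ns. if fst c = n then h c else 0)"
      unfolding sum_fun_apply hn_def ..
    also have "\<dots> = (if fst c \<in> Ns then h c else 0)" using fN by (simp add: sum.delta)
    also have "\<dots> = h c" unfolding Ns_def by auto
    finally show "h c = (\<Sum>n\<in>Ns. hn h n) c" by simp
  qed
  have "hn h n \<in> module.span fscale ?B" if n: "n \<in> Ns" for n
  proof -
    have n1: "1 \<le> n"
    proof (rule ccontr)
      assume "\<not> 1 \<le> n"
      then have "n = 0" by simp
      then obtain c where c: "h c \<noteq> 0" "fst c = 0" using n unfolding Ns_def by auto
      then have "c \<in> fock_classes" using h unfolding fock_space_def by blast
      then have "c = one_c" using fst_zero_class c(2) by blast
      then show False using h_one[OF p] c(1) by simp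
    qed
    let ?C = "{G \<in> HG {1..n}. hg_connected {1..n} (hg_compl {1..n} G)}"
    have "wn h n \<in> {p. hg_primitive {1..n} p}" using w_prim[OF p n1] by simp
    also have "{p. hg_primitive {1..n} p} = module.span fscale ((omega {1..n} :: _ \<Rightarrow> _ \<Rightarrow> 'k) ` ?C)"
      using part1[of "{1..n}", where 'k='k] by simp
    finally have "cls n (wn h n) \<in> module.span fscale (cls n ` (omega {1..n} :: _ \<Rightarrow> _ \<Rightarrow> 'k) ` ?C)"
      by (rule cls_span)
    also have "\<dots> \<subseteq> module.span fscale ?B"
      by (rule module.span_mono[OF fmod]) (use n1 in blast)
    finally show ?thesis using hn_cls[OF h, of n] by simp
  qed
  then have "(\<Sum>n\<in>Ns. hn h n) \<in> module.span fscale ?B"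
    by (intro module.span_sum[OF fmod])
  then show ?thesis using heq by simp
qed


lemma card_rl:
  assumes "bij_betw \<sigma> {1..n} {1..n}" "H \<in> HG {1..n}"
  shows "card (image \<sigma> ` H) = card H"
proof -
  have "inj_on (image \<sigma>) H"
    using inj_on_image_Pow[OF bij_betw_imp_inj_on[OF assms(1)]] HG_Pow[OF assms(2)] by (rule inj_on_subset)
  then show ?thesis by (rule card_image)
qed

lemma omega_rl:
  fixes n :: nat
  assumes s: "bij_betw \<sigma> {1..n} {1..n}" and G: "G \<in> HG {1..n}" and H: "H \<in> HG {1..n}"
  shows "(omega {1..n} (image \<sigma> ` G) (image \<sigma> ` H) :: 'k::field) = omega {1..n} G H"
proof -
  have inj: "inj_on (image \<sigma>) (Pow {1..n})" by (rule inj_on_image_Pow[OF bij_betw_imp_inj_on[OF s]])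
  have GP: "G \<subseteq> Pow {1..n}" and HP: "H \<subseteq> Pow {1..n}" using HG_Pow G H by auto
  have sub: "image \<sigma> ` G \<subseteq> image \<sigma> ` H \<longleftrightarrow> G \<subseteq> H" by (rule inj_on_img_sub[OF inj GP HP])
  have "image \<sigma> ` (H - G) = image \<sigma> ` H - image \<sigma> ` G"
    by (rule inj_on_image_set_diff[OF inj]) (use GP HP in auto)
  moreover have "card (image \<sigma> ` (H - G)) = card (H - G)"
    by (rule card_image, rule inj_on_subset[OF inj]) (use HP in auto)
  ultimately have c: "card (image \<sigma> ` H - image \<sigma> ` G) = card (H - G)" by simp
  have h1: "image \<sigma> ` H \<subseteq> hyperedges {1..n}" using rl_HG[OF s H] unfolding HG_def by simp
  have h2: "H \<subseteq> hyperedges {1..n}" using H unfolding HG_def by simp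
  show ?thesis unfolding omega_eq[OF finite_atLeastAtMost] using sub c h1 h2 by simp
qed

lemma cls_omega_inv:
  fixes n :: nat
  assumes G: "G \<in> HG {1..n}" "G' \<in> HG {1..n}" and e: "cl_of {1..n} G = cl_of {1..n} G'"
  shows "cls n (omega {1..n} G :: _ \<Rightarrow> 'k::field) = cls n (omega {1..n} G')"
proof
  fix c
  obtain \<sigma> where s: "bij_betw \<sigma> {1..n} {1..n}" "G' = image \<sigma> ` G"
    using cl_of_eqD[OF e _ _ HG_Pow[OF G(1)] HG_Pow[OF G(2)]] by auto
  show "cls n (omega {1..n} G :: _ \<Rightarrow> 'k) c = cls n (omega {1..n} G') c"
  proof (cases "c \<in> fock_classes \<and> fst c = n")
    case True
    let ?A = "{H \<in> HG {1..n}. cl_of {1..n} H = c}"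
    have sc: "snd c = ?A" using snd_class[of c] True by simp
    have bA: "bij_betw (\<lambda>H. image \<sigma> ` H) ?A ?A"
    proof (rule bij_filter[OF rl_bij[OF s(1)]])
      fix H assume "H \<in> HG {1..n}"
      then have "cl_of {1..n} (image \<sigma> ` H) = cl_of {1..n} H"
        by (intro cl_of_eqI[OF s(1) HG_Pow refl, symmetric])
      then show "cl_of {1..n} (image \<sigma> ` H) = c \<longleftrightarrow> cl_of {1..n} H = c" by simp
    qed
    have "(\<Sum>H\<in>?A. (omega {1..n} G' H :: 'k)) = (\<Sum>H\<in>?A. omega {1..n} G' (image \<sigma> ` H))"
      by (rule sum.reindex_bij_betw[OF bA, symmetric])
    also have "\<dots> = (\<Sum>H\<in>?A. omega {1..n} G H)"
      by (rule sum.cong[OF refl]) (use omega_rl[OF s(1) G(1)] s(2) in auto)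
    finally show ?thesis unfolding cls_def if_P[OF True] sc by simp
  next
    case False
    show ?thesis unfolding cls_def if_not_P[OF False] ..
  qed
qed


lemma cls_omega_at:
  fixes n0 n :: nat
  assumes G0: "G0 \<in> HG {1..n0}" and G: "G \<in> HG {1..n}" and cG: "card G0 \<le> card G"
  shows "(cls n (omega {1..n} G) (cl_of {1..n0} G0) :: 'k::field)
     = (if n = n0 \<and> cl_of {1..n0} G = cl_of {1..n0} G0 then 1 else 0)"
proof (cases "n = n0")
  case False
  then show ?thesis unfolding cls_def by simp
next
  case True
  let ?c = "cl_of {1..n0} G0"
  let ?A = "{H \<in> HG {1..n0}. cl_of {1..n0} H = ?c}"
  have cf: "?c \<in> fock_classes" by (rule cl_in_fock[OF _ G0]) simp
  have sc: "snd ?c = ?A" using snd_class[OF cf] by simp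
  have fA: "finite ?A" by (rule finite_subset[of _ "HG {1..n0}"]) (auto intro: HG_finite)
  have om: "(omega {1..n0} G H :: 'k) = (if H = G then 1 else 0)" if H: "H \<in> ?A" for H
  proof -
    have H1: "H \<in> HG {1..n0}" "cl_of {1..n0} H = ?c" using H by auto
    obtain \<sigma> where s: "bij_betw \<sigma> {1..n0} {1..n0}" "H = image \<sigma> ` G0"
      using cl_of_eqD[OF H1(2)[symmetric] _ _ HG_Pow[OF G0] HG_Pow[OF H1(1)]] by auto
    have cH: "card H = card G0" unfolding s(2) by (rule card_rl[OF s(1) G0])
    have HX: "H \<subseteq> hyperedges {1..n0}" using H1(1) unfolding HG_def by simp
    have fH: "finite H" using HX finite_hyperedges[of "{1..n0}"] finite_subset by auto
    have "G \<subseteq> H \<longleftrightarrow> H = G"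
    proof
      assume "G \<subseteq> H"
      moreover have "card H \<le> card G" using cH cG by simp
      ultimately show "H = G" using card_subset_eq[OF fH] by (metis antisym card_mono fH)
    qed simp
    then show ?thesis unfolding omega_eq[OF finite_atLeastAtMost] using HX True by auto
  qed
  have "cls n (omega {1..n} G) ?c = (\<Sum>H\<in>?A. (omega {1..n0} G H :: 'k))"
    unfolding cls_def using cf True sc by simp
  also have "\<dots> = (\<Sum>H\<in>?A. if H = G then 1 else 0)" by (rule sum.cong[OF refl]) (rule om)
  also have "\<dots> = (if G \<in> ?A then 1 else 0)" using fA by (simp add: sum.delta')
  also have "\<dots> = (if n = n0 \<and> cl_of {1..n0} G = ?c then 1 else 0)" using G True by simp
  finally show ?thesis .
qed

lemma fock_indep:
  "\<not> module.dependent fscale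
     {cls n (omega {1..n} G :: nat set set \<Rightarrow> 'k::field) | n G.
        1 \<le> n \<and> G \<in> HG {1..n} \<and> hg_connected {1..n} (hg_compl {1..n} G)}"
  (is "\<not> module.dependent fscale ?B")
  unfolding module.dependent_explicit[OF fmod]
proof clarify
  fix t u x0 assume t: "finite t" "t \<subseteq> ?B" and s: "(\<Sum>v\<in>t. fscale (u v) v) = 0"
    and x0: "x0 \<in> t" "u x0 \<noteq> 0"
  have "\<forall>x\<in>t. \<exists>p. x = cls (fst p) (omega {1..fst p} (snd p)) \<and> snd p \<in> HG {1..fst p}"
  proof
    fix x assume "x \<in> t"
    then have "x \<in> ?B" using t(2) by blast
    then obtain n G where "x = cls n (omega {1..n} G)" "G \<in> HG {1..n}" by blast
    then show "\<exists>p. x = cls (fst p) (omega {1..fst p} (snd p)) \<and> snd p \<in> HG {1..fst p}"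
      by (intro exI[of _ "(n, G)"]) simp
  qed
  then obtain N where N: "\<And>x. x \<in> t \<Longrightarrow> x = cls (fst (N x)) (omega {1..fst (N x)} (snd (N x))) \<and> snd (N x) \<in> HG {1..fst (N x)}"
    using bchoice by metis
  let ?t' = "{x \<in> t. u x \<noteq> 0}"
  let ?k = "\<lambda>x. card (snd (N x))"
  have ft': "finite ?t'" using t(1) by simp
  have ne: "?k ` ?t' \<noteq> {}" using x0 by blast
  obtain x1 where x1: "x1 \<in> ?t'" "?k x1 = Min (?k ` ?t')"
    using Min_in[OF finite_imageI[OF ft'] ne] by auto
  have kmin: "?k x1 \<le> ?k x" if "x \<in> ?t'" for x
  proof -
    have "?k x \<in> ?k ` ?t'" using that by (rule imageI)
    then have "Min (?k ` ?t') \<le> ?k x" by (rule Min_le[OF finite_imageI[OF ft']])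
    then show ?thesis using x1(2) by simp
  qed
  define n0 where "n0 = fst (N x1)"
  define G0 where "G0 = snd (N x1)"
  have x1e: "x1 = cls n0 (omega {1..n0} G0)" "G0 \<in> HG {1..n0}" using N[of x1] x1(1) unfolding n0_def G0_def by auto
  let ?c = "cl_of {1..n0} G0"
  have val: "(x ?c :: 'k) = (if x = x1 then 1 else 0)" if x: "x \<in> ?t'" for x
  proof -
    have xe: "x = cls (fst (N x)) (omega {1..fst (N x)} (snd (N x)))" "snd (N x) \<in> HG {1..fst (N x)}"
      using N[of x] x by auto
    have "(x ?c :: 'k) = (if fst (N x) = n0 \<and> cl_of {1..n0} (snd (N x)) = ?c then 1 else 0)"
      using cls_omega_at[OF x1e(2) xe(2), where 'k='k] kmin[OF x] xe(1) unfolding G0_def by simp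
    also have "(fst (N x) = n0 \<and> cl_of {1..n0} (snd (N x)) = ?c) \<longleftrightarrow> x = x1"
    proof
      assume a: "fst (N x) = n0 \<and> cl_of {1..n0} (snd (N x)) = ?c"
      have "x = cls n0 (omega {1..n0} (snd (N x)))" using xe(1) a by simp
      also have "\<dots> = cls n0 (omega {1..n0} G0)"
        by (rule cls_omega_inv) (use xe(2) a x1e(2) in auto)
      finally show "x = x1" using x1e(1) by simp
    next
      assume "x = x1"
      then show "fst (N x) = n0 \<and> cl_of {1..n0} (snd (N x)) = ?c" unfolding n0_def G0_def by simp
    qed
    finally show ?thesis .
  qed
  have "0 = (\<Sum>v\<in>t. fscale (u v) v) ?c" using s by simp
  also have "\<dots> = (\<Sum>v\<in>t. u v * v ?c)" by (simp add: sum_fun_apply)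
  also have "\<dots> = (\<Sum>v\<in>t. if v = x1 then u x1 else 0)"
  proof (rule sum.cong[OF refl])
    fix v assume v: "v \<in> t"
    show "u v * v ?c = (if v = x1 then u x1 else 0)"
    proof (cases "u v = 0")
      case True
      then have "v \<noteq> x1" using x1(1) by auto
      then show ?thesis using True by simp
    next
      case False
      then show ?thesis using val[of v] v by simp
    qed
  qed
  also have "\<dots> = u x1" using t(1) x1(1) by (simp add: sum.delta')
  finally show False using x1(1) by simp
qed


theorem mainTheorem14:
  fixes I :: "'v set"
  assumes "finite I"
  shows "(inj_on (omega I :: 'v set set \<Rightarrow> 'v set set \<Rightarrow> 'k::field_char_0)
             {G \<in> HG I. hg_connected I (hg_compl I G)}
       \<and> \<not> module.dependent fscale
           ((omega I :: 'v set set \<Rightarrow> 'v set set \<Rightarrow> 'k) ` {G \<in> HG I. hg_connected I (hg_compl I G)})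
       \<and> module.span fscale
           ((omega I :: 'v set set \<Rightarrow> 'v set set \<Rightarrow> 'k) ` {G \<in> HG I. hg_connected I (hg_compl I G)})
         = {p. hg_primitive I p})
       \<and> (\<not> module.dependent fscale
           {cls n (omega {1..n} G :: nat set set \<Rightarrow> 'k) | n G.
              1 \<le> n \<and> G \<in> HG {1..n} \<and> hg_connected {1..n} (hg_compl {1..n} G)}
       \<and> module.span fscale
           {cls n (omega {1..n} G :: nat set set \<Rightarrow> 'k) | n G.
              1 \<le> n \<and> G \<in> HG {1..n} \<and> hg_connected {1..n} (hg_compl {1..n} G)}
         = {h. fock_primitive h})"
proof (rule conjI)
  show "inj_on (omega I :: 'v set set \<Rightarrow> 'v set set \<Rightarrow> 'k::field_char_0)
             {G \<in> HG I. hg_connected I (hg_compl I G)}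
       \<and> \<not> module.dependent fscale
           ((omega I :: 'v set set \<Rightarrow> 'v set set \<Rightarrow> 'k) ` {G \<in> HG I. hg_connected I (hg_compl I G)})
       \<and> module.span fscale
           ((omega I :: 'v set set \<Rightarrow> 'v set set \<Rightarrow> 'k) ` {G \<in> HG I. hg_connected I (hg_compl I G)})
         = {p. hg_primitive I p}"
    by (rule part1[OF assms])
  show "\<not> module.dependent fscale
           {cls n (omega {1..n} G :: nat set set \<Rightarrow> 'k) | n G.
              1 \<le> n \<and> G \<in> HG {1..n} \<and> hg_connected {1..n} (hg_compl {1..n} G)}
       \<and> module.span fscale
           {cls n (omega {1..n} G :: nat set set \<Rightarrow> 'k) | n G.
              1 \<le> n \<and> G \<in> HG {1..n} \<and> hg_connected {1..n} (hg_compl {1..n} G)}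
         = {h. fock_primitive h}"
  proof (rule conjI)
    show "\<not> module.dependent fscale
           {cls n (omega {1..n} G :: nat set set \<Rightarrow> 'k) | n G.
              1 \<le> n \<and> G \<in> HG {1..n} \<and> hg_connected {1..n} (hg_compl {1..n} G)}"
      by (rule fock_indep)
    show "module.span fscale
           {cls n (omega {1..n} G :: nat set set \<Rightarrow> 'k) | n G.
              1 \<le> n \<and> G \<in> HG {1..n} \<and> hg_connected {1..n} (hg_compl {1..n} G)}
         = {h. fock_primitive h}"
    proof (rule equalityI)
      show "module.span fscale
           {cls n (omega {1..n} G :: nat set set \<Rightarrow> 'k) | n G.
              1 \<le> n \<and> G \<in> HG {1..n} \<and> hg_connected {1..n} (hg_compl {1..n} G)}
         \<subseteq> {h. fock_primitive h}" by (rule span_sub_prim)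
      show "{h. fock_primitive h} \<subseteq> module.span fscale
           {cls n (omega {1..n} G :: nat set set \<Rightarrow> 'k) | n G.
              1 \<le> n \<and> G \<in> HG {1..n} \<and> hg_connected {1..n} (hg_compl {1..n} G)}"
        using prim_sub_span by blast
    qed
  qed
qed

end
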